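(* On $\mathcal{V}_n^q$, for every $\mu\subset(k^n)$, $$(1+\beta H_1)v_\mu=\frac{\Pi(t_\mu)}{\Pi(t_\emptyset)}\sum_{(\lambda,d)}q^d\beta^{|\lambda/d/\mu|}v_\lambda,$$ where the sum runs over pairs $(\lambda,d)$ with $\lambda\subset(k^n)$, $d\in\{0,1\}$, such that $\mu[0]_i\le\lambda[d]_i$ for all $i$ and the cylindric skew diagram $\lambda/d/\mu$ contains at most one box in each column and at most one box in each row. Moreover, $$H(x|t)E(\ominus x|t)=\prod_{j=1}^n(t_j\ominus x)\prod_{j=n+1}^N(x\ominus t_j)\,(1+\beta H_1)+q\cdot 1\quad\text{on }\mathcal{V}_n^q.$$
   Context: $\beta$ indeterminate, $x\oplus y=x+y+\beta xy$, $x\ominus y=(x-y)/(1+\beta y)$, $\ominus x=-x/(1+\beta x)$, $N=n+k$. $V=\mathbb{Z}v_0\oplus\mathbb{Z}v_1$, $\sigma^-v_1=v_0,\sigma^-v_0=0,\sigma^+v_0=v_1,\sigma^+v_1=0$. $\mathcal{V}_n^q$ is the span (over formal power series in $q$ with coefficients rational in $\beta,t_1,\dots,t_N$) of the vectors $v_\lambda=v_{b_1}\otimes\cdots\otimes v_{b_N}\in V^{\otimes N}$, $\lambda\subset(k^n)$, where $b_i=1$ iff $i\in I_\lambda=\{\lambda_{n+1-i}+i:1\le i\le n\}$. For the $j$-th factor, $L_j(x)=\sum e_{ab}\otimes L_{ab}$ ($e_{ab}v_b=v_a$ on an auxiliary $V$) with $L_{00}=\sigma^+\sigma^-+(x\ominus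 t_j)\sigma^-\sigma^+$, $L_{01}=(1+\beta\,x\ominus t_j)\sigma^+$, $L_{10}=\sigma^-$, $L_{11}=\sigma^-\sigma^+$, and $L'_j(x)$ with $L'_{00}=\sigma^-\sigma^++(x\oplus t_j)\sigma^+\sigma^-$, $L'_{01}=\sigma^+$, $L'_{10}=(1+\beta\,x\oplus t_j)\sigma^-$, $L'_{11}=\sigma^+\sigma^-$. $M(x)=L_N\cdots L_1=\sum e_{ab}\otimes M_{ab}$, $A=M_{00}$, $D=M_{11}$, likewise $A',D'$ from $L'$; $H(x|t)=A+qD$, $E(x|t)=A'+qD'$. Operators $H_1,\dots,H_k$ on $\mathcal{V}_n^q$ are defined by the expansion $H(x|t)|_{\mathcal{V}_n^q}=(x|t^* )^k\cdot\mathbf{1}+(1+\beta x)\sum_{r=1}^kH_r\frac{(x|t^* )^{k-r}}{1+\beta t_{n+r}}$, where $t^*=(\ominus t_N,\dots,\ominus t_1)$ and $(x|s)^m=\prod_{i=1}^m(x\oplus s_i)$. $\Pi(t_\mu)=\prod_{i\in I_\mu}(1+\beta t_i)$, $\Pi(t_\emptyset)=\prod_{i=1}^n(1+\beta t_i)$. Cylindric loops: for $r\in\mathbb{Z}$, $\lambda[r]$ is the sequence $(\lambda[r]_i)_{i\in\mathbb{Z}}$ with $\lambda[r]_{r+i}=\lambda_i+r$ for $1\le i\le n$ and $\lambda[r]_{i+n}=\lambda[r]_i-k$. The cylindric skew diagram is $\lambda/d/\mu=\{\langle i,j\rangle\in\mathbb{Z}^2/(n,-k)\mathbb{Z}:\lambda[d]_i\ge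 j>\mu[0]_i\}$, and $|\lambda/d/\mu|$ is its number of boxes (counted modulo the shift by $(n,-k)$). *)

theory Defs
  imports Main
begin

definition oplusb :: "'a::field \<Rightarrow> 'a \<Rightarrow> 'a \<Rightarrow> 'a" where
  "oplusb \<beta> x y = x + y + \<beta> * x * y"

definition ominusb :: "'a::field \<Rightarrow> 'a \<Rightarrow> 'a \<Rightarrow> 'a" where
  "ominusb \<beta> x y = (x - y) / (1 + \<beta> * y)"

definition onegb :: "'a::field \<Rightarrow> 'a \<Rightarrow> 'a" where
  "onegb \<beta> x = - x / (1 + \<beta> * x)"

text \<open>Basis vectors of V: True = v_1, False = v_0.
  Lloc beta t x j a c s s' is the matrix element of L_{j,ac} from site state s to
  site state s' (a = auxiliary output index, c = auxiliary input index).\<close>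

definition Lloc :: "'a::field \<Rightarrow> (nat \<Rightarrow> 'a) \<Rightarrow> 'a \<Rightarrow> nat \<Rightarrow> bool \<Rightarrow> bool \<Rightarrow> bool \<Rightarrow> bool \<Rightarrow> 'a" where
  "Lloc \<beta> t x j a c s s' =
    (if \<not> a \<and> \<not> c then (if s = s' then (if s then 1 else ominusb \<beta> x (t j)) else 0)
     else if \<not> a \<and> c then (if \<not> s \<and> s' then 1 + \<beta> * ominusb \<beta> x (t j) else 0)
     else if a \<and> \<not> c then (if s \<and> \<not> s' then 1 else 0)
     else (if \<not> s \<and> \<not> s' then 1 else 0))"

definition Lloc' :: "'a::field \<Rightarrow> (nat \<Rightarrow> 'a) \<Rightarrow> 'a \<Rightarrow> nat \<Rightarrow> bool \<Rightarrow> bool \<Rightarrow> bool \<Rightarrow> bool \<Rightarrow> 'a" where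
  "Lloc' \<beta> t x j a c s s' =
    (if \<not> a \<and> \<not> c then (if s = s' then (if s then oplusb \<beta> x (t j) else 1) else 0)
     else if \<not> a \<and> c then (if \<not> s \<and> s' then 1 else 0)
     else if a \<and> \<not> c then (if s \<and> \<not> s' then 1 + \<beta> * oplusb \<beta> x (t j) else 0)
     else (if s \<and> s' then 1 else 0))"

text \<open>Quantum space basis: v_{b_1} (x) ... (x) v_{b_N} is indexed by S = {i. b_i = 1} \<subseteq> {1..N}.
  transfer loc b j c S' S = matrix element (S -> S' on sites 1..j) of (L_j ... L_1)_{c b}.\<close>

fun transfer :: "(nat \<Rightarrow> bool \<Rightarrow> bool \<Rightarrow> bool \<Rightarrow> bool \<Rightarrow> 'a::field) \<Rightarrow> bool \<Rightarrow> nat \<Rightarrow> bool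
                  \<Rightarrow> nat set \<Rightarrow> nat set \<Rightarrow> 'a" where
  "transfer loc b 0 c S' S = (if c = b then 1 else 0)"
| "transfer loc b (Suc j) c S' S =
     loc (Suc j) c False (Suc j \<in> S) (Suc j \<in> S') * transfer loc b j False S' S
   + loc (Suc j) c True (Suc j \<in> S) (Suc j \<in> S') * transfer loc b j True S' S"

definition Mono :: "(nat \<Rightarrow> bool \<Rightarrow> bool \<Rightarrow> bool \<Rightarrow> bool \<Rightarrow> 'a::field) \<Rightarrow> nat \<Rightarrow> bool \<Rightarrow> bool
                  \<Rightarrow> nat set \<Rightarrow> nat set \<Rightarrow> 'a" where
  "Mono loc N a b S' S = transfer loc b N a S' S"

text \<open>H(x|t) = A + qD and E(x|t) = A' + qD', as matrices (output index S', input index S).\<close>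

definition Hop :: "'a::field \<Rightarrow> (nat \<Rightarrow> 'a) \<Rightarrow> 'a \<Rightarrow> nat \<Rightarrow> 'a \<Rightarrow> nat set \<Rightarrow> nat set \<Rightarrow> 'a" where
  "Hop \<beta> t q N x S' S =
     Mono (Lloc \<beta> t x) N False False S' S + q * Mono (Lloc \<beta> t x) N True True S' S"

definition Eop :: "'a::field \<Rightarrow> (nat \<Rightarrow> 'a) \<Rightarrow> 'a \<Rightarrow> nat \<Rightarrow> 'a \<Rightarrow> nat set \<Rightarrow> nat set \<Rightarrow> 'a" where
  "Eop \<beta> t q N x S' S =
     Mono (Lloc' \<beta> t x) N False False S' S + q * Mono (Lloc' \<beta> t x) N True True S' S"

text \<open>Index sets of the basis vectors v_lambda, lambda \<subseteq> (k^n): the n-subsets of {1..N}.\<close>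

definition nsub :: "nat \<Rightarrow> nat \<Rightarrow> nat set set" where
  "nsub n N = {S. S \<subseteq> {1..N} \<and> card S = n}"

text \<open>(x|t^*)^m with t^* = (-t_N, ..., -t_1).\<close>

definition tpoch :: "'a::field \<Rightarrow> (nat \<Rightarrow> 'a) \<Rightarrow> nat \<Rightarrow> nat \<Rightarrow> 'a \<Rightarrow> 'a" where
  "tpoch \<beta> t N m x = (\<Prod>i\<in>{1..m}. oplusb \<beta> x (onegb \<beta> (t (N + 1 - i))))"

text \<open>The operators H_1, ..., H_k on V_n^q (as matrices on n-subsets), defined by the expansion
  of H(x|t) restricted to V_n^q.\<close>

definition Hcoef :: "'a::field \<Rightarrow> (nat \<Rightarrow> 'a) \<Rightarrow> 'a \<Rightarrow> nat \<Rightarrow> nat \<Rightarrow> nat \<Rightarrow> nat set \<Rightarrow> nat set \<Rightarrow> 'a" where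
  "Hcoef \<beta> t q n k = (THE Hs.
      (\<forall>r S' S. (r \<notin> {1..k} \<or> S \<notin> nsub n (n + k) \<or> S' \<notin> nsub n (n + k)) \<longrightarrow> Hs r S' S = 0)
    \<and> (\<forall>x. \<forall>S\<in>nsub n (n + k). \<forall>S'\<in>nsub n (n + k).
         Hop \<beta> t q (n + k) x S' S =
           (if S' = S then tpoch \<beta> t (n + k) k x else 0)
           + (1 + \<beta> * x) * (\<Sum>r\<in>{1..k}. Hs r S' S * tpoch \<beta> t (n + k) (k - r) x
                                          / (1 + \<beta> * t (n + r)))))"

definition parts :: "nat \<Rightarrow> nat \<Rightarrow> (nat \<Rightarrow> nat) set" where
  "parts n k = {la. (\<forall>i\<in>{1..n}. la i \<le> k) \<and> (\<forall>i. 1 \<le> i \<and> i < n \<longrightarrow> la (Suc i) \<le> la i)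
                  \<and> (\<forall>i. i \<notin> {1..n} \<longrightarrow> la i = 0)}"

definition Iset :: "nat \<Rightarrow> (nat \<Rightarrow> nat) \<Rightarrow> nat set" where
  "Iset n la = {la (n + 1 - i) + i | i. i \<in> {1..n}}"

definition vvec :: "nat \<Rightarrow> (nat \<Rightarrow> nat) \<Rightarrow> nat set \<Rightarrow> 'a::field" where
  "vvec n la S = (if S = Iset n la then 1 else 0)"

definition PiT :: "'a::field \<Rightarrow> (nat \<Rightarrow> 'a) \<Rightarrow> nat set \<Rightarrow> 'a" where
  "PiT \<beta> t S = (\<Prod>i\<in>S. 1 + \<beta> * t i)"

text \<open>Cylindric loop: loop n k lambda r j = lambda[r]_j (j \<in> \<int>), requires n \<ge> 1.\<close>

definition loop :: "nat \<Rightarrow> nat \<Rightarrow> (nat \<Rightarrow> nat) \<Rightarrow> int \<Rightarrow> int \<Rightarrow> int" where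
  "loop n k la r j = int (la (nat ((j - r - 1) mod int n) + 1)) + r - ((j - r - 1) div int n) * int k"

text \<open>Lift of the cylindric skew diagram lambda/d/mu to \<int>^2.\<close>

definition skew_lift :: "nat \<Rightarrow> nat \<Rightarrow> (nat \<Rightarrow> nat) \<Rightarrow> int \<Rightarrow> (nat \<Rightarrow> nat) \<Rightarrow> (int \<times> int) set" where
  "skew_lift n k la d mu = {(i, j). loop n k la d i \<ge> j \<and> j > loop n k mu 0 i}"

definition cyl_rel :: "nat \<Rightarrow> nat \<Rightarrow> ((int \<times> int) \<times> (int \<times> int)) set" where
  "cyl_rel n k = {((i, j), (i', j')). \<exists>m::int. i' = i + m * int n \<and> j' = j - m * int k}"

text \<open>|lambda/d/mu|: number of boxes modulo the shift by (n,-k).\<close>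

definition skew_size :: "nat \<Rightarrow> nat \<Rightarrow> (nat \<Rightarrow> nat) \<Rightarrow> int \<Rightarrow> (nat \<Rightarrow> nat) \<Rightarrow> nat" where
  "skew_size n k la d mu = card (skew_lift n k la d mu // cyl_rel n k)"

definition pieri_pairs :: "nat \<Rightarrow> nat \<Rightarrow> (nat \<Rightarrow> nat) \<Rightarrow> ((nat \<Rightarrow> nat) \<times> nat) set" where
  "pieri_pairs n k mu = {(la, d). la \<in> parts n k \<and> d \<in> {0, 1}
      \<and> (\<forall>i. loop n k mu 0 i \<le> loop n k la (int d) i)
      \<and> (\<forall>i j j'. (i, j) \<in> skew_lift n k la (int d) mu \<longrightarrow> (i, j') \<in> skew_lift n k la (int d) mu \<longrightarrow> j = j')
      \<and> (\<forall>i i' j. (i, j) \<in> skew_lift n k la (int d) mu \<longrightarrow> (i', j) \<in> skew_lift n k la (int d) mu \<longrightarrow> i = i')}"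

end

theory Submission
  imports Defs "HOL-Computational_Algebra.Polynomial"
begin


lemma transfer_cong:
  assumes "\<forall>i\<in>{1..j}. (i \<in> S' \<longleftrightarrow> i \<in> T') \<and> (i \<in> S \<longleftrightarrow> i \<in> T)"
  shows "transfer loc b j c S' S = transfer loc b j c T' T"
  using assms by (induction j arbitrary: c) auto

definition TT where
  "TT L L' b b' j c c' S' S = (\<Sum>U\<in>Pow {1..j}. transfer L b j c S' U * transfer L' b' j c' U S)"

lemma TT_0: "TT L L' b b' 0 c c' S' S = (if c = b \<and> c' = b' then 1 else 0)"
  by (simp add: TT_def)

lemma TT_Suc: "TT L L' b b' (Suc j) c c' S' S =
  (\<Sum>d\<in>UNIV. \<Sum>d'\<in>UNIV. \<Sum>u\<in>UNIV.
     L (Suc j) c d u (Suc j \<in> S') * L' (Suc j) c' d' (Suc j \<in> S) u * TT L L' b b' j d d' S' S)"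
proof -
  have P: "Pow {1..Suc j} = Pow {1..j} \<union> insert (Suc j) ` Pow {1..j}"
    by (simp add: atLeastAtMostSuc_conv Pow_insert)
  have D: "Pow {1..j} \<inter> insert (Suc j) ` Pow {1..j} = {}" by auto
  have C1: "transfer L b j d S' (insert (Suc j) U) = transfer L b j d S' U" for d U
    by (rule transfer_cong) auto
  have C2: "transfer L' b' j d (insert (Suc j) U) S = transfer L' b' j d U S" for d U
    by (rule transfer_cong) auto
  have N: "U \<in> Pow {1..j} \<Longrightarrow> Suc j \<notin> U" for U by auto
  have I: "inj_on (insert (Suc j)) (Pow {1..j})"
    by (rule inj_onI) (metis N insert_ident)
  have E0: "transfer L b (Suc j) c S' U * transfer L' b' (Suc j) c' U S =
     (\<Sum>d\<in>UNIV. \<Sum>d'\<in>UNIV. L (Suc j) c d False (Suc j \<in> S') * L' (Suc j) c' d' (Suc j \<in> S) False *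
        (transfer L b j d S' U * transfer L' b' j d' U S))" if "U \<in> Pow {1..j}" for U
    using N[OF that] by (simp add: UNIV_bool distrib_left distrib_right mult.assoc mult.left_commute)
  have E1: "transfer L b (Suc j) c S' (insert (Suc j) U) * transfer L' b' (Suc j) c' (insert (Suc j) U) S =
     (\<Sum>d\<in>UNIV. \<Sum>d'\<in>UNIV. L (Suc j) c d True (Suc j \<in> S') * L' (Suc j) c' d' (Suc j \<in> S) True *
        (transfer L b j d S' U * transfer L' b' j d' U S))" for U
    by (simp add: UNIV_bool distrib_left distrib_right mult.assoc mult.left_commute C1 C2)
  have "TT L L' b b' (Suc j) c c' S' S =
     (\<Sum>U\<in>Pow {1..j}. transfer L b (Suc j) c S' U * transfer L' b' (Suc j) c' U S)
   + (\<Sum>U\<in>Pow {1..j}. transfer L b (Suc j) c S' (insert (Suc j) U) * transfer L' b' (Suc j) c' (insert (Suc j) U) S)"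
    unfolding TT_def P
    apply (subst sum.union_disjoint)
       apply simp apply simp apply (rule D)
    apply (subst sum.reindex[OF I])
    apply simp
    done
  also have "\<dots> = (\<Sum>U\<in>Pow {1..j}. \<Sum>d\<in>UNIV. \<Sum>d'\<in>UNIV. L (Suc j) c d False (Suc j \<in> S') * L' (Suc j) c' d' (Suc j \<in> S) False *
        (transfer L b j d S' U * transfer L' b' j d' U S))
      + (\<Sum>U\<in>Pow {1..j}. \<Sum>d\<in>UNIV. \<Sum>d'\<in>UNIV. L (Suc j) c d True (Suc j \<in> S') * L' (Suc j) c' d' (Suc j \<in> S) True *
        (transfer L b j d S' U * transfer L' b' j d' U S))"
    apply (rule arg_cong2[where f="(+)"])
     apply (rule sum.cong, rule refl, rule E0, assumption)
    apply (rule sum.cong, rule refl, rule E1)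
    done
  also have "\<dots> = (\<Sum>d\<in>UNIV. \<Sum>d'\<in>UNIV. \<Sum>u\<in>UNIV.
     L (Suc j) c d u (Suc j \<in> S') * L' (Suc j) c' d' (Suc j \<in> S) u * TT L L' b b' j d d' S' S)"
    unfolding TT_def by (simp add: UNIV_bool sum.distrib sum_distrib_left mult.assoc)
  finally show ?thesis .
qed


definition tau :: "'a::field \<Rightarrow> nat \<Rightarrow> bool \<Rightarrow> bool \<Rightarrow> bool \<Rightarrow> bool \<Rightarrow> 'a" where
 "tau \<beta> j a c s s' = (if \<not> a \<and> \<not> c then (if s = s' then 1 else 0)
     else if \<not> a \<and> c then (if \<not> s \<and> s' then \<beta> else 0)
     else if a \<and> \<not> c then (if s \<and> \<not> s' then 1 else 0) else 0)"

definition Fs :: "'a::field \<Rightarrow> (nat \<Rightarrow> 'a) \<Rightarrow> 'a \<Rightarrow> nat \<Rightarrow> nat set \<Rightarrow> 'a" where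
 "Fs \<beta> t x j S = (\<Prod>i\<in>{1..j}. if i \<in> S then ominusb \<beta> (t i) x else ominusb \<beta> x (t i))"

definition dl :: "nat \<Rightarrow> nat set \<Rightarrow> nat set \<Rightarrow> 'a::field" where
 "dl j S' S = (\<Prod>i\<in>{1..j}. if (i \<in> S) = (i \<in> S') then 1 else 0)"

lemma Fs_Suc: "Fs \<beta> t x (Suc j) S = Fs \<beta> t x j S * (if Suc j \<in> S then ominusb \<beta> (t (Suc j)) x else ominusb \<beta> x (t (Suc j)))"
  by (simp add: Fs_def prod.cl_ivl_Suc)
lemma dl_Suc: "dl (Suc j) S' S = dl j S' S * (if (Suc j \<in> S) = (Suc j \<in> S') then 1 else 0)"
  by (simp add: dl_def prod.cl_ivl_Suc)

lemma oplus_oneg: "1 + \<beta> * x \<noteq> 0 \<Longrightarrow> oplusb \<beta> (onegb \<beta> x) y = ominusb (\<beta>::'a::field) y x"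
  unfolding oplusb_def onegb_def ominusb_def
  by (simp add: divide_simps) (simp add: algebra_simps)
lemma key1: "1 + \<beta> * x \<noteq> 0 \<Longrightarrow> 1 + \<beta> * y \<noteq> 0 \<Longrightarrow>
   ominusb \<beta> x y * (1 + \<beta> * ominusb (\<beta>::'a::field) y x) = - ominusb \<beta> y x"
  unfolding ominusb_def
  by (simp add: divide_simps) (simp add: algebra_simps)

lemma key2: "1 + \<beta> * x \<noteq> 0 \<Longrightarrow> 1 + \<beta> * y \<noteq> 0 \<Longrightarrow>
   (1 + \<beta> * ominusb \<beta> x y) * (1 + \<beta> * ominusb (\<beta>::'a::field) y x) = 1"
  unfolding ominusb_def
  by (simp add: divide_simps) (simp add: algebra_simps)

lemma tau_simps:
  "tau \<beta> j False False s s' = (if s = s' then 1 else 0)"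
  "tau \<beta> j False True s s' = (if \<not> s \<and> s' then \<beta> else 0)"
  "tau \<beta> j True False s s' = (if s \<and> \<not> s' then 1 else 0)"
  "tau \<beta> j True True s s' = 0"
  by (simp_all add: tau_def)
lemma Lloc_simps:
  "Lloc \<beta> t x j False False s s' = (if s = s' then (if s then 1 else ominusb \<beta> x (t j)) else 0)"
  "Lloc \<beta> t x j False True s s' = (if \<not> s \<and> s' then 1 + \<beta> * ominusb \<beta> x (t j) else 0)"
  "Lloc \<beta> t x j True False s s' = (if s \<and> \<not> s' then 1 else 0)"
  "Lloc \<beta> t x j True True s s' = (if \<not> s \<and> \<not> s' then 1 else 0)"
  by (simp_all add: Lloc_def)
lemma Lloc'_simps:
  "Lloc' \<beta> t x j False False s s' = (if s = s' then (if s then oplusb \<beta> x (t j) else 1) else 0)"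
  "Lloc' \<beta> t x j False True s s' = (if \<not> s \<and> s' then 1 else 0)"
  "Lloc' \<beta> t x j True False s s' = (if s \<and> \<not> s' then 1 + \<beta> * oplusb \<beta> x (t j) else 0)"
  "Lloc' \<beta> t x j True True s s' = (if s \<and> s' then 1 else 0)"
  by (simp_all add: Lloc'_def)

lemma K00:
  fixes \<beta> x :: "'a::field"
  assumes "\<forall>i\<in>{1..j}. 1 + \<beta> * t i \<noteq> 0" "1 + \<beta> * x \<noteq> 0"
  shows "TT (Lloc \<beta> t x) (Lloc' \<beta> t (onegb \<beta> x)) False False j False False S' S = Fs \<beta> t x j S * transfer (tau \<beta>) False j False S' S
       \<and> TT (Lloc \<beta> t x) (Lloc' \<beta> t (onegb \<beta> x)) False False j True False S' S = Fs \<beta> t x j S * transfer (tau \<beta>) False j True S' S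
       \<and> TT (Lloc \<beta> t x) (Lloc' \<beta> t (onegb \<beta> x)) False False j False True S' S = - Fs \<beta> t x j S * transfer (tau \<beta>) False j True S' S"
  using assms(1)
proof (induction j)
  case 0
  then show ?case by (simp add: TT_0 Fs_def)
next
  case (Suc j)
  have h: "1 + \<beta> * t (Suc j) \<noteq> 0" using Suc.prems by auto
  from Suc have IH: "TT (Lloc \<beta> t x) (Lloc' \<beta> t (onegb \<beta> x)) False False j False False S' S = Fs \<beta> t x j S * transfer (tau \<beta>) False j False S' S"
       "TT (Lloc \<beta> t x) (Lloc' \<beta> t (onegb \<beta> x)) False False j True False S' S = Fs \<beta> t x j S * transfer (tau \<beta>) False j True S' S"
       "TT (Lloc \<beta> t x) (Lloc' \<beta> t (onegb \<beta> x)) False False j False True S' S = - Fs \<beta> t x j S * transfer (tau \<beta>) False j True S' S"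
    by auto
  show ?case
    unfolding TT_Suc
    by (simp add: UNIV_bool IH Fs_Suc Lloc_simps Lloc'_simps tau_simps oplus_oneg[OF assms(2)]
        key1[OF assms(2) h] key2[OF assms(2) h], (simp add: algebra_simps)?)
qed

lemma K11:
  "TT (Lloc \<beta> t x) (Lloc' \<beta> t y) True True j c c' S' S = (if j = 0 \<and> c \<and> c' then 1 else 0)"
proof (induction j arbitrary: c c')
  case 0 then show ?case by (simp add: TT_0)
next
  case (Suc j) then show ?case
    unfolding TT_Suc by (cases c; cases c') (simp_all add: UNIV_bool Lloc_simps Lloc'_simps)
qed

lemma KXY:
  fixes \<beta> x :: "'a::field"
  assumes "\<forall>i\<in>{1..j}. 1 + \<beta> * t i \<noteq> 0" "1 + \<beta> * x \<noteq> 0"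
  defines "L \<equiv> Lloc \<beta> t x" and "L' \<equiv> Lloc' \<beta> t (onegb \<beta> x)"
  shows "TT L L' False True j False True S' S = dl j S' S - TT L L' False True j True False S' S
       \<and> TT L L' True False j False True S' S = dl j S' S - TT L L' True False j True False S' S
       \<and> TT L L' True False j True False S' S = TT L L' False True j True False S' S + Fs \<beta> t x j S * transfer (tau \<beta>) True j True S' S
       \<and> TT L L' True False j False False S' S = TT L L' False True j False False S' S + Fs \<beta> t x j S * transfer (tau \<beta>) True j False S' S"
  using assms(1)
proof (induction j)
  case 0
  then show ?case by (simp add: TT_0 Fs_def dl_def)
next
  case (Suc j)
  have h: "1 + \<beta> * t (Suc j) \<noteq> 0" using Suc.prems by auto
  from Suc have IH: "TT L L' False True j False True S' S = dl j S' S - TT L L' False True j True False S' S"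
       "TT L L' True False j False True S' S = dl j S' S - TT L L' True False j True False S' S"
       "TT L L' True False j True False S' S = TT L L' False True j True False S' S + Fs \<beta> t x j S * transfer (tau \<beta>) True j True S' S"
       "TT L L' True False j False False S' S = TT L L' False True j False False S' S + Fs \<beta> t x j S * transfer (tau \<beta>) True j False S' S"
    by auto
  show ?case
    unfolding TT_Suc L_def L'_def
    by (simp add: UNIV_bool IH[unfolded L_def L'_def] Fs_Suc dl_Suc Lloc_simps Lloc'_simps tau_simps oplus_oneg[OF assms(2)]
        key1[OF assms(2) h] key2[OF assms(2) h], (simp add: algebra_simps)?)
qed


lemma transfer_cons:
  assumes cons: "\<And>j a c s s'. loc j a c s s' \<noteq> 0 \<Longrightarrow> (of_bool c + of_bool s :: nat) = of_bool a + of_bool s'"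
  shows "transfer loc b j c S' S \<noteq> 0 \<Longrightarrow> of_bool b + card (S \<inter> {1..j}) = of_bool c + card (S' \<inter> {1..j})"
proof (induction j arbitrary: c)
  case 0 then show ?case by (auto split: if_splits)
next
  case (Suc j)
  have cS: "card (A \<inter> {1..Suc j}) = card (A \<inter> {1..j}) + of_bool (Suc j \<in> A)" for A :: "nat set"
  proof -
    have "A \<inter> {1..Suc j} = (if Suc j \<in> A then insert (Suc j) (A \<inter> {1..j}) else A \<inter> {1..j})"
      by (auto simp: atLeastAtMostSuc_conv)
    then show ?thesis by auto
  qed
  from Suc.prems have "(loc (Suc j) c False (Suc j \<in> S) (Suc j \<in> S') \<noteq> 0 \<and> transfer loc b j False S' S \<noteq> 0)
     \<or> (loc (Suc j) c True (Suc j \<in> S) (Suc j \<in> S') \<noteq> 0 \<and> transfer loc b j True S' S \<noteq> 0)"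
    by (auto simp del: of_bool_eq)
  then obtain d where
    d: "loc (Suc j) c d (Suc j \<in> S) (Suc j \<in> S') \<noteq> 0" "transfer loc b j d S' S \<noteq> 0"
    by blast
  show ?case using Suc.IH[OF d(2)] cons[OF d(1)] unfolding cS[of S] cS[of S']
    by (cases b; cases c; cases d; cases "Suc j \<in> S"; cases "Suc j \<in> S'") simp_all
qed

lemma Lloc_cons: "Lloc \<beta> t x j a c s s' \<noteq> 0 \<Longrightarrow> (of_bool c + of_bool s :: nat) = of_bool a + of_bool s'"
  by (cases a; cases c; cases s; cases s') (auto simp: Lloc_simps)
lemma Lloc'_cons: "Lloc' \<beta> t x j a c s s' \<noteq> 0 \<Longrightarrow> (of_bool c + of_bool s :: nat) = of_bool a + of_bool s'"
  by (cases a; cases c; cases s; cases s') (auto simp: Lloc'_simps)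

lemma dl_eq: "S \<subseteq> {1..N} \<Longrightarrow> S' \<subseteq> {1..N} \<Longrightarrow> dl N S' S = (if S' = S then 1 else 0)"
  unfolding dl_def
  apply (cases "S' = S")
   apply simp
  apply (subgoal_tac "\<exists>i\<in>{1..N}. (i \<in> S) \<noteq> (i \<in> S')")
   apply (auto simp: prod_zero_iff)[1]
  apply blast
  done

lemma Eop_cons:
  assumes "Eop \<beta> t q N y U S \<noteq> 0" "U \<subseteq> {1..N}" "S \<subseteq> {1..N}"
  shows "card U = card S"
proof -
  have UU: "U \<inter> {1..N} = U" "S \<inter> {1..N} = S" using assms by auto
  have cons: "\<And>j a c s s'. Lloc' \<beta> t y j a c s s' \<noteq> 0 \<Longrightarrow> (of_bool c + of_bool s :: nat) = of_bool a + of_bool s'"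
    by (rule Lloc'_cons)
  from assms(1) have "Mono (Lloc' \<beta> t y) N False False U S \<noteq> 0 \<or> Mono (Lloc' \<beta> t y) N True True U S \<noteq> 0"
    unfolding Eop_def by auto
  then show ?thesis
    using transfer_cons[of "Lloc' \<beta> t y" False N False U S, OF cons]
      transfer_cons[of "Lloc' \<beta> t y" True N True U S, OF cons]
    unfolding Mono_def UU by auto
qed

lemma HE:
  fixes \<beta> x q :: "'a::field"
  assumes S: "S \<in> nsub n N" and S': "S' \<in> nsub n N" and N: "N \<ge> 1"
    and tne: "\<forall>i\<in>{1..N}. 1 + \<beta> * t i \<noteq> 0" and xne: "1 + \<beta> * x \<noteq> 0"
  shows "(\<Sum>U\<in>nsub n N. Hop \<beta> t q N x S' U * Eop \<beta> t q N (onegb \<beta> x) U S)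
    = Fs \<beta> t x N S * (transfer (tau \<beta>) False N False S' S + q * transfer (tau \<beta>) True N True S' S)
      + (if S' = S then q else 0)"
proof -
  let ?L = "Lloc \<beta> t x" and ?L' = "Lloc' \<beta> t (onegb \<beta> x)"
  have sub: "nsub n N \<subseteq> Pow {1..N}" by (auto simp: nsub_def)
  have SS: "S \<subseteq> {1..N}" "S' \<subseteq> {1..N}" "card S = n" using S S' by (auto simp: nsub_def)
  have "(\<Sum>U\<in>nsub n N. Hop \<beta> t q N x S' U * Eop \<beta> t q N (onegb \<beta> x) U S)
      = (\<Sum>U\<in>Pow {1..N}. Hop \<beta> t q N x S' U * Eop \<beta> t q N (onegb \<beta> x) U S)"
  proof (rule sum.mono_neutral_left[OF _ sub])
    show "\<forall>i\<in>Pow {1..N} - nsub n N. Hop \<beta> t q N x S' i * Eop \<beta> t q N (onegb \<beta> x) i S = 0"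
      using Eop_cons SS by (fastforce simp: nsub_def)
  qed simp
  also have "\<dots> = TT ?L ?L' False False N False False S' S + q * TT ?L ?L' False True N False True S' S
       + q * TT ?L ?L' True False N True False S' S + q * q * TT ?L ?L' True True N True True S' S"
  proof -
    have e: "Hop \<beta> t q N x S' U * Eop \<beta> t q N (onegb \<beta> x) U S =
      transfer ?L False N False S' U * transfer ?L' False N False U S
      + q * (transfer ?L False N False S' U * transfer ?L' True N True U S)
      + q * (transfer ?L True N True S' U * transfer ?L' False N False U S)
      + q * q * (transfer ?L True N True S' U * transfer ?L' True N True U S)" for U
      unfolding Hop_def Eop_def Mono_def by (simp add: algebra_simps)
    show ?thesis by (simp only: e TT_def sum.distrib sum_distrib_left[symmetric])
  qed
  also have "\<dots> = Fs \<beta> t x N S * (transfer (tau \<beta>) False N False S' S + q * transfer (tau \<beta>) True N True S' S)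
      + q * dl N S' S"
  proof -
    note k0 = K00[OF tne xne, of S' S] and kx = KXY[OF tne xne, of S' S]
    have k1: "TT ?L ?L' True True N True True S' S = 0" using K11[of \<beta> t x "onegb \<beta> x" N True True S' S] N by simp
    show ?thesis
      apply (simp only: k1 conjunct1[OF k0] conjunct1[OF kx] conjunct1[OF conjunct2[OF conjunct2[OF kx]]])
      apply (simp add: algebra_simps)
      done
  qed
  also have "\<dots> = Fs \<beta> t x N S * (transfer (tau \<beta>) False N False S' S + q * transfer (tau \<beta>) True N True S' S)
      + (if S' = S then q else 0)"
    using dl_eq[OF SS(1,2), where 'a='a] by simp
  finally show ?thesis .
qed


fun transferR :: "(nat \<Rightarrow> bool \<Rightarrow> bool \<Rightarrow> bool \<Rightarrow> bool \<Rightarrow> 'a::comm_ring_1) \<Rightarrow> bool \<Rightarrow> nat \<Rightarrow> bool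
                  \<Rightarrow> nat set \<Rightarrow> nat set \<Rightarrow> 'a" where
  "transferR loc b 0 c S' S = (if c = b then 1 else 0)"
| "transferR loc b (Suc j) c S' S =
     loc (Suc j) c False (Suc j \<in> S) (Suc j \<in> S') * transferR loc b j False S' S
   + loc (Suc j) c True (Suc j \<in> S) (Suc j \<in> S') * transferR loc b j True S' S"

lemma transfer_R: "transfer loc b j c S' S = transferR loc b j c S' S"
  by (induction j arbitrary: c) auto

lemma poly_transferR: "poly (transferR L b j c S' S) x = transferR (\<lambda>j a c s s'. poly (L j a c s s') x) b j c S' S"
  by (induction j arbitrary: c) auto

lemma coeff_mult_le:
  fixes p q :: "'a::idom poly"
  assumes "degree p \<le> m" "degree q \<le> n"
  shows "coeff (p * q) (m + n) = coeff p m * coeff q n"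
proof (cases "degree p = m \<and> degree q = n")
  case True then show ?thesis using coeff_mult_degree_sum[of p q] by simp
next
  case False
  then have "degree (p * q) < m + n" using degree_mult_le[of p q] assms by linarith
  moreover have "coeff p m = 0 \<or> coeff q n = 0" using False assms
    by (metis coeff_eq_0 le_neq_implies_less)
  ultimately show ?thesis by (auto simp: coeff_eq_0)
qed

lemma transferR_degree:
  fixes L :: "nat \<Rightarrow> bool \<Rightarrow> bool \<Rightarrow> bool \<Rightarrow> bool \<Rightarrow> 'a::idom poly"
  assumes deg: "\<And>j a c s s'. degree (L j a c s s') \<le> dd j s"
  shows "degree (transferR L b j c S' S) \<le> (\<Sum>i\<in>{1..j}. dd i (i \<in> S))
     \<and> coeff (transferR L b j c S' S) (\<Sum>i\<in>{1..j}. dd i (i \<in> S))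
        = transferR (\<lambda>j a c s s'. coeff (L j a c s s') (dd j s)) b j c S' S"
proof (induction j arbitrary: c)
  case 0 then show ?case by simp
next
  case (Suc j)
  have sm: "(\<Sum>i\<in>{1..Suc j}. dd i (i \<in> S)) = dd (Suc j) (Suc j \<in> S) + (\<Sum>i\<in>{1..j}. dd i (i \<in> S))"
    by (simp add: sum.cl_ivl_Suc)
  let ?m = "\<Sum>i\<in>{1..j}. dd i (i \<in> S)"
  have d1: "degree (L (Suc j) c d (Suc j \<in> S) (Suc j \<in> S') * transferR L b j d S' S)
      \<le> dd (Suc j) (Suc j \<in> S) + ?m" for d
    using degree_mult_le[of "L (Suc j) c d (Suc j \<in> S) (Suc j \<in> S')" "transferR L b j d S' S"]
      deg[of "Suc j" c d "Suc j \<in> S" "Suc j \<in> S'"] Suc.IH[of d] by linarith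
  show ?case
    unfolding sm
    using d1[of False] d1[of True] Suc.IH[of False] Suc.IH[of True]
    by (auto simp: degree_add_le coeff_mult_le[OF deg])
qed

lemma transferR_factor:
  "transferR (\<lambda>j a c s s'. g j s * w j a c s s') b j c S' S = (\<Prod>i\<in>{1..j}. g i (i \<in> S)) * transferR w b j c S' S"
  by (induction j arbitrary: c) (simp_all add: prod.cl_ivl_Suc algebra_simps)


definition mP :: "'a::field \<Rightarrow> (nat \<Rightarrow> 'a) \<Rightarrow> nat \<Rightarrow> 'a poly" where
  "mP \<beta> t j = [: - t j / (1 + \<beta> * t j), 1 / (1 + \<beta> * t j) :]"

definition LP :: "'a::field \<Rightarrow> (nat \<Rightarrow> 'a) \<Rightarrow> nat \<Rightarrow> bool \<Rightarrow> bool \<Rightarrow> bool \<Rightarrow> bool \<Rightarrow> 'a poly" where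
  "LP \<beta> t j a c s s' =
    (if \<not> a \<and> \<not> c then (if s = s' then (if s then 1 else mP \<beta> t j) else 0)
     else if \<not> a \<and> c then (if \<not> s \<and> s' then 1 + smult \<beta> (mP \<beta> t j) else 0)
     else if a \<and> \<not> c then (if s \<and> \<not> s' then 1 else 0)
     else (if \<not> s \<and> \<not> s' then 1 else 0))"

lemma poly_mP: "poly (mP \<beta> t j) x = ominusb \<beta> x (t j)"
  by (simp add: mP_def ominusb_def add_divide_distrib diff_divide_distrib algebra_simps)

lemma poly_LP: "(\<lambda>j a c s s'. poly (LP \<beta> t j a c s s') x) = Lloc \<beta> t x"
  by (intro ext) (simp add: LP_def Lloc_def poly_mP)

lemma degree_LP: "degree (LP \<beta> t j a c s s') \<le> (if s then 0 else 1)"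
  by (auto simp: LP_def mP_def degree_add_le)

lemma coeff_LP: "coeff (LP \<beta> t j a c s s') (if s then 0 else 1) = (if s then 1 else 1 / (1 + \<beta> * t j)) * tau \<beta> j a c s s'"
  by (auto simp: LP_def mP_def tau_def)

definition HopP :: "'a::field \<Rightarrow> (nat \<Rightarrow> 'a) \<Rightarrow> 'a \<Rightarrow> nat \<Rightarrow> nat set \<Rightarrow> nat set \<Rightarrow> 'a poly" where
  "HopP \<beta> t q N S' S = transferR (LP \<beta> t) False N False S' S + smult q (transferR (LP \<beta> t) True N True S' S)"

lemma poly_HopP: "poly (HopP \<beta> t q N S' S) x = Hop \<beta> t q N x S' S"
  by (simp add: HopP_def Hop_def Mono_def transfer_R poly_transferR poly_LP)

lemma sum_card: "(\<Sum>i\<in>{1..N::nat}. (if i \<in> S then 0 else 1::nat)) = card ({1..N} - S)"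
proof -
  have "(\<Sum>i\<in>{1..N}. (if i \<in> S then 0 else 1::nat)) = (\<Sum>i\<in>{1..N} - S. 1)"
    by (rule sum.mono_neutral_cong_right[of "{1..N}" "{1..N} - S"]) auto
  then show ?thesis by simp
qed

lemma HopP_degree_coeff:
  "degree (HopP \<beta> t q N S' S) \<le> card ({1..N} - S)
   \<and> coeff (HopP \<beta> t q N S' S) (card ({1..N} - S))
       = (\<Prod>i\<in>{1..N}. if i \<in> S then 1 else 1 / (1 + \<beta> * t i))
         * (transfer (tau \<beta>) False N False S' S + q * transfer (tau \<beta>) True N True S' S)"
proof -
  note X = transferR_degree[of "LP \<beta> t" "\<lambda>j s. if s then 0 else 1", OF degree_LP, unfolded sum_card]
  have cf: "(\<lambda>j a c s s'. coeff (LP \<beta> t j a c s s') (if s then 0 else 1)) =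
        (\<lambda>j a c s s'. (\<lambda>j s. if s then 1 else 1 / (1 + \<beta> * t j)) j s * tau \<beta> j a c s s')"
    by (intro ext) (simp add: coeff_LP)
  show ?thesis
    using X[of False N False S' S] X[of True N True S' S]
    unfolding HopP_def cf transferR_factor transfer_R
    by (auto simp: degree_add_le algebra_simps intro: order.trans[OF degree_add_le])
qed


lemma om_x0: "\<beta> \<noteq> 0 \<Longrightarrow> 1 + \<beta> * y \<noteq> 0 \<Longrightarrow> ominusb \<beta> (- (1/\<beta>)) y = - (1/(\<beta>::'a::field))"
  unfolding ominusb_def by (simp add: divide_simps)

lemma V1:
  assumes "\<beta> \<noteq> 0" "\<forall>i\<in>{1..j}. 1 + \<beta> * t i \<noteq> 0"
  shows "transfer (Lloc \<beta> t (- (1/\<beta>))) True j c S' S = (if c \<and> (\<forall>i\<in>{1..j}. i \<notin> S \<and> i \<notin> S') then 1 else (0::'a::field))"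
  using assms(2)
proof (induction j arbitrary: c)
  case 0 then show ?case by simp
next
  case (Suc j)
  have h: "1 + \<beta> * t (Suc j) \<noteq> 0" using Suc.prems by auto
  have z: "1 + \<beta> * ominusb \<beta> (- (1/\<beta>)) (t (Suc j)) = 0" using om_x0[OF assms(1) h] assms(1) by simp
  have IH: "transfer (Lloc \<beta> t (- (1/\<beta>))) True j d S' S = (if d \<and> (\<forall>i\<in>{1..j}. i \<notin> S \<and> i \<notin> S') then 1 else 0)" for d
    using Suc by auto
  show ?case
    by (cases c) (auto simp: IH Lloc_simps z atLeastAtMostSuc_conv)
qed

lemma V0:
  assumes "\<beta> \<noteq> 0" "\<forall>i\<in>{1..j}. 1 + \<beta> * t i \<noteq> 0"
  shows "transfer (Lloc \<beta> t (- (1/\<beta>))) False j False S' S =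
     (if \<forall>i\<in>{1..j}. (i \<in> S) = (i \<in> S') then (\<Prod>i\<in>{1..j}. if i \<in> S then 1 else - (1/\<beta>)) else (0::'a::field))"
  using assms(2)
proof (induction j)
  case 0 then show ?case by simp
next
  case (Suc j)
  have h: "1 + \<beta> * t (Suc j) \<noteq> 0" using Suc.prems by auto
  have z: "1 + \<beta> * ominusb \<beta> (- (1/\<beta>)) (t (Suc j)) = 0" using om_x0[OF assms(1) h] assms(1) by simp
  have IH: "transfer (Lloc \<beta> t (- (1/\<beta>))) False j False S' S =
     (if \<forall>i\<in>{1..j}. (i \<in> S) = (i \<in> S') then (\<Prod>i\<in>{1..j}. if i \<in> S then 1 else - (1/\<beta>)) else 0)"
    using Suc by auto
  show ?case
    using assms(1) by (auto simp: IH Lloc_simps z om_x0[OF assms(1) h] atLeastAtMostSuc_conv prod.cl_ivl_Suc)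
qed

lemma prod_card: "(\<Prod>i\<in>{1..N::nat}. (if i \<in> S then 1 else y)) = y ^ card ({1..N} - S)"
proof -
  have "(\<Prod>i\<in>{1..N::nat}. (if i \<in> S then 1 else y)) = (\<Prod>i\<in>{1..N} - S. y)"
    by (rule prod.mono_neutral_cong_right[of "{1..N}" "{1..N} - S"]) auto
  then show ?thesis by simp
qed

lemma nsub_props:
  assumes "S \<in> nsub n (n + k)"
  shows "S \<subseteq> {1..n+k}" "card S = n" "card ({1..n+k} - S) = k" "finite S"
proof -
  show S: "S \<subseteq> {1..n+k}" "card S = n" using assms by (auto simp: nsub_def)
  then show "card ({1..n+k} - S) = k" by (simp add: card_Diff_subset finite_subset)
  show "finite S" using S(1) finite_subset by blast
qed

lemma Hop_x0:
  assumes b: "\<beta> \<noteq> 0" and tne: "\<forall>i\<in>{1..n+k}. 1 + \<beta> * t i \<noteq> 0" and n: "n \<ge> 1"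
    and S: "S \<in> nsub n (n + k)" and S': "S' \<in> nsub n (n + k)"
  shows "Hop \<beta> t q (n + k) (- (1/\<beta>)) S' S = (if S' = S then (- (1/\<beta>))^k else 0)"
proof -
  note P = nsub_props[OF S] and P' = nsub_props[OF S']
  have ex: "\<exists>i\<in>{1..n+k}. i \<in> S"
  proof -
    have "S \<noteq> {}" using P(2) n by auto
    then show ?thesis using P(1) by auto
  qed
  have eq: "(\<forall>i\<in>{1..n+k}. (i \<in> S) = (i \<in> S')) = (S' = S)" using P(1) P'(1) by auto
  show ?thesis
    unfolding Hop_def Mono_def V0[OF b tne] V1[OF b tne] eq prod_card P(3)
    using ex by auto
qed

lemma tau0_T: "transfer (tau (0::'a::field)) True j False S' S = 0 \<and> (j \<ge> 1 \<longrightarrow> transfer (tau (0::'a::field)) True j True S' S = 0)"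
  by (induction j) (auto simp: tau_simps)

lemma tau0_F: "transfer (tau (0::'a::field)) False j False S' S = dl j S' S"
  by (induction j) (auto simp: tau_simps dl_Suc dl_def)


definition tpP :: "'a::field \<Rightarrow> (nat \<Rightarrow> 'a) \<Rightarrow> nat \<Rightarrow> nat \<Rightarrow> 'a poly" where
  "tpP \<beta> t N m = (\<Prod>i\<in>{1..m}. mP \<beta> t (N + 1 - i))"

lemma oplus_oneg': "1 + \<beta> * y \<noteq> 0 \<Longrightarrow> oplusb \<beta> x (onegb \<beta> y) = ominusb (\<beta>::'a::field) x y"
  unfolding oplusb_def onegb_def ominusb_def
  by (simp add: divide_simps) (simp add: algebra_simps)

lemma poly_tpP:
  assumes "\<forall>i\<in>{1..m}. 1 + \<beta> * t (N + 1 - i) \<noteq> 0"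
  shows "poly (tpP \<beta> t N m) x = tpoch \<beta> t N m x"
  unfolding tpP_def tpoch_def poly_prod poly_mP
  using assms by (intro prod.cong) (auto simp: oplus_oneg')

lemma mP_props: "1 + \<beta> * t j \<noteq> 0 \<Longrightarrow> mP \<beta> t j \<noteq> 0 \<and> degree (mP \<beta> t j) = 1 \<and> coeff (mP \<beta> t j) 1 = 1 / (1 + \<beta> * t j)"
  by (simp add: mP_def)

lemma tpP_props:
  assumes "\<forall>i\<in>{1..m}. 1 + \<beta> * t (N + 1 - i) \<noteq> 0"
  shows "degree (tpP \<beta> t N m) = m \<and> coeff (tpP \<beta> t N m) m = (\<Prod>i\<in>{1..m}. 1 / (1 + \<beta> * t (N + 1 - i)))"
proof -
  have nz: "\<forall>i\<in>{1..m}. mP \<beta> t (N + 1 - i) \<noteq> 0" using assms mP_props by blast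
  have "(\<Sum>i\<in>{1..m}. degree (mP \<beta> t (N + 1 - i))) = (\<Sum>i\<in>{1..m}. 1)"
  proof (intro sum.cong refl)
    fix i assume "i \<in> {1..m}"
    then have "1 + \<beta> * t (N + 1 - i) \<noteq> 0" using assms by blast
    then show "degree (mP \<beta> t (N + 1 - i)) = 1" using mP_props by blast
  qed
  then have d: "degree (tpP \<beta> t N m) = m"
    unfolding tpP_def degree_prod_eq_sum_degree[OF nz] by simp
  have "lead_coeff (tpP \<beta> t N m) = (\<Prod>i\<in>{1..m}. 1 / (1 + \<beta> * t (N + 1 - i)))"
    unfolding tpP_def lead_coeff_prod
  proof (intro prod.cong refl)
    fix i assume "i \<in> {1..m}"
    then have "1 + \<beta> * t (N + 1 - i) \<noteq> 0" using assms by blast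
    then show "lead_coeff (mP \<beta> t (N + 1 - i)) = 1 / (1 + \<beta> * t (N + 1 - i))" using mP_props by metis
  qed
  with d show ?thesis by simp
qed

lemma tpP_Suc: "tpP \<beta> t N (Suc m) = tpP \<beta> t N m * mP \<beta> t (N - m)"
  by (simp add: tpP_def prod.cl_ivl_Suc)

lemma basis_exists:
  fixes tp :: "nat \<Rightarrow> 'a::field poly"
  assumes "\<forall>i\<le>m. degree (tp i) = i \<and> coeff (tp i) i \<noteq> 0"
  shows "degree g \<le> m \<Longrightarrow> \<exists>c. g = (\<Sum>i\<le>m. smult (c i) (tp i))"
  using assms
proof (induction m arbitrary: g)
  case 0
  then have g: "g = [:coeff g 0:]" and t: "tp 0 = [:coeff (tp 0) 0:]" "coeff (tp 0) 0 \<noteq> 0"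
    by (auto simp: degree_0_id)
  show ?case
  proof (rule exI[of _ "\<lambda>i. coeff g 0 / coeff (tp 0) 0"])
    have "smult (coeff g 0 / coeff (tp 0) 0) (tp 0) = [:coeff g 0:]"
      by (subst (2) t(1)) (use t(2) in simp)
    then show "g = (\<Sum>i\<le>0. smult (coeff g 0 / coeff (tp 0) 0) (tp i))" using g by simp
  qed
next
  case (Suc m g)
  define a where "a = coeff g (Suc m) / coeff (tp (Suc m)) (Suc m)"
  let ?g = "g - smult a (tp (Suc m))"
  have ts: "degree (tp (Suc m)) = Suc m" "coeff (tp (Suc m)) (Suc m) \<noteq> 0" using Suc.prems by auto
  have "degree ?g \<le> m"
  proof (rule degree_le, intro allI impI)
    fix i assume "m < i"
    show "coeff ?g i = 0"
    proof (cases "i = Suc m")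
      case True then show ?thesis using ts by (simp add: a_def)
    next
      case False
      then have "i > Suc m" using \<open>m < i\<close> by simp
      then show ?thesis using ts Suc.prems(1) by (simp add: coeff_eq_0)
    qed
  qed
  then obtain c where c: "?g = (\<Sum>i\<le>m. smult (c i) (tp i))" using Suc.IH Suc.prems by auto
  show ?case
  proof (rule exI[of _ "c(Suc m := a)"])
    have "(\<Sum>i\<le>Suc m. smult ((c(Suc m := a)) i) (tp i)) = (\<Sum>i\<le>m. smult (c i) (tp i)) + smult a (tp (Suc m))"
      by (simp add: sum.atMost_Suc)
    then show "g = (\<Sum>i\<le>Suc m. smult ((c(Suc m := a)) i) (tp i))" using c by (simp add: algebra_simps)
  qed
qed

lemma basis_indep:
  fixes tp :: "nat \<Rightarrow> 'a::field poly"
  assumes "\<forall>i\<le>m. degree (tp i) = i \<and> coeff (tp i) i \<noteq> 0"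
  shows "(\<Sum>i\<le>m. smult (c i) (tp i)) = 0 \<Longrightarrow> \<forall>i\<le>m. c i = 0"
  using assms
proof (induction m)
  case 0 then show ?case by (auto simp: poly_eq_iff)
next
  case (Suc m)
  have "degree (\<Sum>i\<le>m. smult (c i) (tp i)) \<le> m"
    by (rule degree_sum_le) (use Suc.prems(2) in \<open>auto intro: order.trans[OF degree_smult_le]\<close>)
  then have low: "coeff (\<Sum>i\<le>m. smult (c i) (tp i)) (Suc m) = 0"
    by (intro coeff_eq_0) simp
  have "coeff (\<Sum>i\<le>Suc m. smult (c i) (tp i)) (Suc m) = c (Suc m) * coeff (tp (Suc m)) (Suc m)"
    using low by (simp add: sum.atMost_Suc)
  then have "c (Suc m) * coeff (tp (Suc m)) (Suc m) = 0" using Suc.prems(1) by (metis coeff_0)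
  then have cz: "c (Suc m) = 0" using Suc.prems(2) by simp
  then have "(\<Sum>i\<le>m. smult (c i) (tp i)) = 0" using Suc.prems(1) by (simp add: sum.atMost_Suc)
  then have "\<forall>i\<le>m. c i = 0" using Suc.IH Suc.prems(2) by auto
  then show ?case using cz le_Suc_eq by auto
qed


definition RP :: "'a::field \<Rightarrow> (nat \<Rightarrow> 'a) \<Rightarrow> nat \<Rightarrow> nat \<Rightarrow> 'a \<Rightarrow> (nat \<Rightarrow> 'a) \<Rightarrow> 'a poly" where
  "RP \<beta> t n k \<delta> h = smult \<delta> (tpP \<beta> t (n + k) k)
     + [:1, \<beta>:] * (\<Sum>r\<in>{1..k}. smult (h r / (1 + \<beta> * t (n + r))) (tpP \<beta> t (n + k) (k - r)))"

lemma tne_idx: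
  fixes n k m :: nat
  assumes "\<forall>j\<in>{1..n + k}. 1 + \<beta> * t j \<noteq> 0" "m \<le> k"
  shows "\<forall>i\<in>{1..m}. 1 + \<beta> * t (n + k + 1 - i) \<noteq> 0"
proof
  fix i assume "i \<in> {1..m}"
  then have "n + k + 1 - i \<in> {1..n + k}" using assms(2) by auto
  then show "1 + \<beta> * t (n + k + 1 - i) \<noteq> 0" using assms(1) by blast
qed

lemma poly_RP:
  fixes n k :: nat
  assumes tne: "\<forall>j\<in>{1..n + k}. 1 + \<beta> * t j \<noteq> 0"
  shows "poly (RP \<beta> t n k \<delta> h) x = \<delta> * tpoch \<beta> t (n + k) k x
     + (1 + \<beta> * x) * (\<Sum>r\<in>{1..k}. h r * tpoch \<beta> t (n + k) (k - r) x / (1 + \<beta> * t (n + r)))"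
proof -
  have p: "poly (tpP \<beta> t (n + k) m) x = tpoch \<beta> t (n + k) m x" if "m \<le> k" for m
    by (rule poly_tpP) (use tne_idx[OF tne that] in simp)
  have s: "(\<Sum>r\<in>{1..k}. poly (smult (h r / (1 + \<beta> * t (n + r))) (tpP \<beta> t (n + k) (k - r))) x)
     = (\<Sum>r\<in>{1..k}. h r * tpoch \<beta> t (n + k) (k - r) x / (1 + \<beta> * t (n + r)))"
    by (rule sum.cong) (auto simp: p)
  show ?thesis
    unfolding RP_def by (simp add: poly_sum p mult.commute) (simp add: algebra_simps)
qed

lemma sum_rev1: "(k::nat) \<ge> 1 \<Longrightarrow> (\<Sum>r\<in>{1..k}. f (k - r)) = (\<Sum>i\<le>k - 1. f i)"
  by (rule sum.reindex_bij_witness[of _ "\<lambda>i. k - i" "\<lambda>r. k - r"]) auto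

lemma tpP_basis:
  fixes n k m :: nat
  assumes tne: "\<forall>j\<in>{1..n + k}. 1 + \<beta> * t j \<noteq> 0" and "m \<le> k"
  shows "\<forall>i\<le>m. degree (tpP \<beta> t (n + k) i) = i \<and> coeff (tpP \<beta> t (n + k) i) i \<noteq> 0"
proof (intro allI impI)
  fix i assume "i \<le> m"
  then have h: "\<forall>j\<in>{1..i}. 1 + \<beta> * t (n + k + 1 - j) \<noteq> 0" using tne_idx[OF tne] assms(2) by auto
  show "degree (tpP \<beta> t (n + k) i) = i \<and> coeff (tpP \<beta> t (n + k) i) i \<noteq> 0"
    using tpP_props[OF h] h by simp
qed

lemma coeff_RP:
  fixes n k :: nat
  assumes tne: "\<forall>j\<in>{1..n + k}. 1 + \<beta> * t j \<noteq> 0" and k: "k \<ge> 1"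
  shows "coeff (RP \<beta> t n k \<delta> h) k = coeff (tpP \<beta> t (n + k) k) k * (\<delta> + \<beta> * h 1)"
proof -
  let ?Q = "\<Sum>r\<in>{1..k}. smult (h r / (1 + \<beta> * t (n + r))) (tpP \<beta> t (n + k) (k - r))"
  note B = tpP_basis[OF tne order.refl]
  have c1: "coeff ?Q k = 0"
    unfolding coeff_sum
  proof (intro sum.neutral ballI)
    fix r assume "r \<in> {1..k}"
    then have "degree (tpP \<beta> t (n + k) (k - r)) < k" using B by auto
    then show "coeff (smult (h r / (1 + \<beta> * t (n + r))) (tpP \<beta> t (n + k) (k - r))) k = 0"
      by (simp add: coeff_eq_0)
  qed
  have c2: "coeff ?Q (k - 1) = h 1 / (1 + \<beta> * t (n + 1)) * coeff (tpP \<beta> t (n + k) (k - 1)) (k - 1)"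
    unfolding coeff_sum
  proof -
    have "(\<Sum>r\<in>{1..k}. coeff (smult (h r / (1 + \<beta> * t (n + r))) (tpP \<beta> t (n + k) (k - r))) (k - 1))
        = (\<Sum>r\<in>{1}. coeff (smult (h r / (1 + \<beta> * t (n + r))) (tpP \<beta> t (n + k) (k - r))) (k - 1))"
    proof (rule sum.mono_neutral_right)
      show "\<forall>r\<in>{1..k} - {1}. coeff (smult (h r / (1 + \<beta> * t (n + r))) (tpP \<beta> t (n + k) (k - r))) (k - 1) = 0"
      proof
        fix r assume r: "r \<in> {1..k} - {1}"
        then have "degree (tpP \<beta> t (n + k) (k - r)) < k - 1" using B by auto
        then show "coeff (smult (h r / (1 + \<beta> * t (n + r))) (tpP \<beta> t (n + k) (k - r))) (k - 1) = 0"
          by (simp add: coeff_eq_0)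
      qed
    qed (use k in auto)
    then show "(\<Sum>r\<in>{1..k}. coeff (smult (h r / (1 + \<beta> * t (n + r))) (tpP \<beta> t (n + k) (k - r))) (k - 1))
        = h 1 / (1 + \<beta> * t (n + 1)) * coeff (tpP \<beta> t (n + k) (k - 1)) (k - 1)" by simp
  qed
  have ck: "coeff (tpP \<beta> t (n + k) k) k = coeff (tpP \<beta> t (n + k) (k - 1)) (k - 1) / (1 + \<beta> * t (n + 1))"
  proof -
    obtain m where m: "k = Suc m" using k by (cases k) auto
    have h1: "\<forall>i\<in>{1..k}. 1 + \<beta> * t (n + k + 1 - i) \<noteq> 0" using tne_idx[OF tne] by auto
    have h2: "\<forall>i\<in>{1..m}. 1 + \<beta> * t (n + k + 1 - i) \<noteq> 0" using h1 m by auto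
    have "n + k + 1 - Suc m = n + 1" using m by simp
    then show ?thesis using tpP_props[OF h1] tpP_props[OF h2] m by (simp add: prod.cl_ivl_Suc)
  qed
  have pc: "coeff ([:1, \<beta>:] * p) k = coeff p k + \<beta> * coeff p (k - 1)" for p :: "'a poly"
  proof -
    obtain m where m: "k = Suc m" using k by (cases k) auto
    show ?thesis by (simp add: m)
  qed
  show ?thesis
    unfolding RP_def coeff_add pc c1 c2 coeff_smult ck by (simp add: algebra_simps add_divide_distrib)
qed


lemma coeff_HopP_k:
  assumes S: "S \<in> nsub n (n + k)"
  shows "degree (HopP \<beta> t q (n + k) S' S) \<le> k \<and>
    coeff (HopP \<beta> t q (n + k) S' S) k = (\<Prod>i\<in>{1..n + k}. if i \<in> S then 1 else 1 / (1 + \<beta> * t i))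
         * (transfer (tau \<beta>) False (n + k) False S' S + q * transfer (tau \<beta>) True (n + k) True S' S)"
  using HopP_degree_coeff[of \<beta> t q "n + k" S' S] nsub_props(3)[OF S] by simp

lemma poly_tpP_x0:
  fixes n k :: nat
  assumes b: "\<beta> \<noteq> 0" and tne: "\<forall>j\<in>{1..n + k}. 1 + \<beta> * t j \<noteq> 0"
  shows "poly (tpP \<beta> t (n + k) k) (- (1 / \<beta>)) = (- (1 / \<beta>)) ^ k"
proof -
  have "poly (tpP \<beta> t (n + k) k) (- (1 / \<beta>)) = (\<Prod>i\<in>{1..k}. - (1 / \<beta>))"
    unfolding tpP_def poly_prod poly_mP
  proof (intro prod.cong refl)
    fix i assume "i \<in> {1..k}"
    then have "1 + \<beta> * t (n + k + 1 - i) \<noteq> 0" using tne_idx[OF tne order.refl] by blast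
    then show "ominusb \<beta> (- (1 / \<beta>)) (t (n + k + 1 - i)) = - (1 / \<beta>)" by (rule om_x0[OF b])
  qed
  then show ?thesis by simp
qed

lemma exist_entry:
  fixes n k :: nat and \<beta> q :: "'a::field"
  assumes n: "n \<ge> 1" and k: "k \<ge> 1" and tne: "\<forall>j\<in>{1..n + k}. 1 + \<beta> * t j \<noteq> 0"
    and S: "S \<in> nsub n (n + k)" and S': "S' \<in> nsub n (n + k)"
  shows "\<exists>h. HopP \<beta> t q (n + k) S' S = RP \<beta> t n k (if S' = S then 1 else 0) h"
proof -
  define \<delta> :: 'a where "\<delta> = (if S' = S then 1 else 0)"
  define P0 where "P0 = HopP \<beta> t q (n + k) S' S - smult \<delta> (tpP \<beta> t (n + k) k)"
  note HC = coeff_HopP_k[OF S, of \<beta> t q S']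
  note B = tpP_basis[OF tne order.refl]
  have dP0: "degree P0 \<le> k"
    unfolding P0_def using HC B by (intro degree_diff_le) (auto intro: order.trans[OF degree_smult_le])
  have "\<exists>g. P0 = [:1, \<beta>:] * g \<and> degree g \<le> k - 1"
  proof (cases "\<beta> = 0")
    case True
    have h1: "\<forall>i\<in>{1..k}. 1 + \<beta> * t (n + k + 1 - i) \<noteq> 0" using tne_idx[OF tne order.refl] .
    have ck: "coeff (tpP \<beta> t (n + k) k) k = 1" using tpP_props[OF h1] True by simp
    have SS: "S \<subseteq> {1..n+k}" "S' \<subseteq> {1..n+k}" using nsub_props(1) S S' by auto
    have t0: "transfer (tau \<beta>) True (n + k) True S' S = 0" using True tau0_T[where 'a='a, of "n + k" S' S] k by simp
    have t1: "transfer (tau \<beta>) False (n + k) False S' S = \<delta>"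
      using True tau0_F[where 'a='a, of "n + k" S' S] dl_eq[OF SS, where 'a='a] by (simp add: \<delta>_def)
    have G1: "(\<Prod>i\<in>{1..n + k}. if i \<in> S then 1 else 1 / (1 + \<beta> * t i)) = 1" unfolding True by (simp cong: if_cong)
    have "coeff (HopP \<beta> t q (n + k) S' S) k = \<delta>"
      using conjunct2[OF HC] unfolding t0 t1 G1 by simp
    then have c0: "coeff P0 k = 0" unfolding P0_def using ck by simp
    have "degree P0 \<le> k - 1"
    proof (rule degree_le, intro allI impI)
      fix i assume "k - 1 < i"
      then have "i = k \<or> i > k" by auto
      then show "coeff P0 i = 0" using c0 dP0 by (auto simp: coeff_eq_0)
    qed
    then show ?thesis using True by (intro exI[of _ P0]) simp
  next
    case False
    have "poly P0 (- (1 / \<beta>)) = 0"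
      unfolding P0_def using Hop_x0[OF False tne n S S', of q] poly_tpP_x0[OF False tne]
      by (simp add: poly_HopP \<delta>_def)
    then have "[:- (- (1 / \<beta>)), 1:] dvd P0" by (simp add: poly_eq_0_iff_dvd)
    then obtain g0 where g0: "P0 = [:1 / \<beta>, 1:] * g0" by (auto elim: dvdE)
    have e0: "smult (1 / \<beta>) [:1, \<beta>:] = [:1 / \<beta>, 1:]" using False by simp
    have e: "[:1, \<beta>:] * smult (1 / \<beta>) g0 = [:1 / \<beta>, 1:] * g0"
      by (subst e0[symmetric]) (simp only: mult_smult_right mult_smult_left)
    have "degree g0 \<le> k - 1"
    proof (cases "g0 = 0")
      case True then show ?thesis by simp
    next
      case False
      then have "degree P0 = 1 + degree g0" unfolding g0 by (subst degree_mult_eq) auto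
      then show ?thesis using dP0 by simp
    qed
    then show ?thesis using g0 e by (intro exI[of _ "smult (1 / \<beta>) g0"]) simp
  qed
  then obtain g where g: "P0 = [:1, \<beta>:] * g" "degree g \<le> k - 1" by blast
  obtain c where c: "g = (\<Sum>i\<le>k - 1. smult (c i) (tpP \<beta> t (n + k) i))"
    using basis_exists[OF tpP_basis[OF tne, of "k - 1"] g(2)] by auto
  define h where "h r = c (k - r) * (1 + \<beta> * t (n + r))" for r
  have "(\<Sum>r\<in>{1..k}. smult (h r / (1 + \<beta> * t (n + r))) (tpP \<beta> t (n + k) (k - r)))
      = (\<Sum>r\<in>{1..k}. (\<lambda>i. smult (c i) (tpP \<beta> t (n + k) i)) (k - r))"
  proof (rule sum.cong[OF refl])
    fix r assume "r \<in> {1..k}"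
    then have "1 + \<beta> * t (n + r) \<noteq> 0" using tne by auto
    then show "smult (h r / (1 + \<beta> * t (n + r))) (tpP \<beta> t (n + k) (k - r)) = (\<lambda>i. smult (c i) (tpP \<beta> t (n + k) i)) (k - r)"
      by (simp add: h_def)
  qed
  also have "\<dots> = g" unfolding c by (rule sum_rev1[OF k])
  finally have "RP \<beta> t n k \<delta> h = smult \<delta> (tpP \<beta> t (n + k) k) + P0"
    unfolding RP_def g(1) by simp
  then show ?thesis unfolding P0_def \<delta>_def by (intro exI[of _ h]) simp
qed

lemma uniq_entry:
  fixes n k :: nat and \<beta> :: "'a::field"
  assumes k: "k \<ge> 1" and tne: "\<forall>j\<in>{1..n + k}. 1 + \<beta> * t j \<noteq> 0"
    and eq: "RP \<beta> t n k \<delta> h = RP \<beta> t n k \<delta> h'"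
  shows "\<forall>r\<in>{1..k}. h r = h' r"
proof -
  let ?Q = "\<lambda>h. \<Sum>r\<in>{1..k}. smult (h r / (1 + \<beta> * t (n + r))) (tpP \<beta> t (n + k) (k - r))"
  have "[:1, \<beta>:] * ?Q h = [:1, \<beta>:] * ?Q h'" using eq unfolding RP_def by simp
  then have QQ: "?Q h = ?Q h'" by (subst (asm) mult_cancel_left) simp
  define e where "e i = (h (k - i) - h' (k - i)) / (1 + \<beta> * t (n + (k - i)))" for i
  have "?Q h - ?Q h' = (\<Sum>r\<in>{1..k}. (\<lambda>i. smult (e i) (tpP \<beta> t (n + k) i)) (k - r))"
    unfolding sum_subtractf[symmetric]
  proof (rule sum.cong[OF refl])
    fix r assume r: "r \<in> {1..k}"
    then have "k - (k - r) = r" by auto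
    then show "smult (h r / (1 + \<beta> * t (n + r))) (tpP \<beta> t (n + k) (k - r)) -
         smult (h' r / (1 + \<beta> * t (n + r))) (tpP \<beta> t (n + k) (k - r)) =
         (\<lambda>i. smult (e i) (tpP \<beta> t (n + k) i)) (k - r)"
      by (simp add: e_def diff_divide_distrib smult_diff_left)
  qed
  also have "\<dots> = (\<Sum>i\<le>k - 1. smult (e i) (tpP \<beta> t (n + k) i))" by (rule sum_rev1[OF k])
  finally have "(\<Sum>i\<le>k - 1. smult (e i) (tpP \<beta> t (n + k) i)) = 0" using QQ by simp
  then have ez: "\<forall>i\<le>k - 1. e i = 0" using basis_indep[OF tpP_basis[OF tne, of "k - 1"]] by auto
  show ?thesis
  proof
    fix r assume r: "r \<in> {1..k}"
    then have "e (k - r) = 0" using ez by auto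
    moreover have "k - (k - r) = r" using r by auto
    moreover have "1 + \<beta> * t (n + r) \<noteq> 0" using tne r by auto
    ultimately show "h r = h' r" by (simp add: e_def)
  qed
qed


definition HSpec :: "'a::field \<Rightarrow> (nat \<Rightarrow> 'a) \<Rightarrow> 'a \<Rightarrow> nat \<Rightarrow> nat \<Rightarrow> (nat \<Rightarrow> nat set \<Rightarrow> nat set \<Rightarrow> 'a) \<Rightarrow> bool" where
  "HSpec \<beta> t q n k Hs =
      ((\<forall>r S' S. (r \<notin> {1..k} \<or> S \<notin> nsub n (n + k) \<or> S' \<notin> nsub n (n + k)) \<longrightarrow> Hs r S' S = 0)
    \<and> (\<forall>x. \<forall>S\<in>nsub n (n + k). \<forall>S'\<in>nsub n (n + k).
         Hop \<beta> t q (n + k) x S' S =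
           (if S' = S then tpoch \<beta> t (n + k) k x else 0)
           + (1 + \<beta> * x) * (\<Sum>r\<in>{1..k}. Hs r S' S * tpoch \<beta> t (n + k) (k - r) x
                                          / (1 + \<beta> * t (n + r)))))"

lemma Hcoef_eq: "Hcoef \<beta> t q n k = (THE Hs. HSpec \<beta> t q n k Hs)"
  unfolding Hcoef_def HSpec_def ..

lemma spec_poly:
  fixes \<beta> q :: "'a::field_char_0" and n k :: nat
  assumes H: "HSpec \<beta> t q n k Hs" and tne: "\<forall>j\<in>{1..n + k}. 1 + \<beta> * t j \<noteq> 0"
    and S: "S \<in> nsub n (n + k)" and S': "S' \<in> nsub n (n + k)"
  shows "HopP \<beta> t q (n + k) S' S = RP \<beta> t n k (if S' = S then 1 else 0) (\<lambda>r. Hs r S' S)"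
proof -
  have "poly (HopP \<beta> t q (n + k) S' S) = poly (RP \<beta> t n k (if S' = S then 1 else 0) (\<lambda>r. Hs r S' S))"
  proof
    fix x
    show "poly (HopP \<beta> t q (n + k) S' S) x = poly (RP \<beta> t n k (if S' = S then 1 else 0) (\<lambda>r. Hs r S' S)) x"
      unfolding poly_HopP poly_RP[OF tne] using H S S' unfolding HSpec_def by auto
  qed
  then show ?thesis by (simp add: poly_eq_poly_eq_iff)
qed

lemma ex1_spec:
  fixes \<beta> q :: "'a::field_char_0" and n k :: nat
  assumes n: "n \<ge> 1" and k: "k \<ge> 1" and tne: "\<forall>j\<in>{1..n + k}. 1 + \<beta> * t j \<noteq> 0"
  shows "\<exists>!Hs. HSpec \<beta> t q n k Hs"
proof (rule ex_ex1I)
  define hh where "hh S' S = (SOME h. HopP \<beta> t q (n + k) S' S = RP \<beta> t n k (if S' = S then 1 else 0) h)" for S' S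
  have hh: "HopP \<beta> t q (n + k) S' S = RP \<beta> t n k (if S' = S then 1 else 0) (hh S' S)"
    if "S \<in> nsub n (n + k)" "S' \<in> nsub n (n + k)" for S S'
  proof -
    from exist_entry[OF n k tne that] show ?thesis unfolding hh_def by (rule someI_ex)
  qed
  define Hs where "Hs r S' S = (if r \<in> {1..k} \<and> S \<in> nsub n (n + k) \<and> S' \<in> nsub n (n + k) then hh S' S r else 0)" for r S' S
  show "\<exists>Hs. HSpec \<beta> t q n k Hs"
  proof (rule exI[of _ Hs], unfold HSpec_def, intro conjI allI ballI impI)
    fix r S' S assume "r \<notin> {1..k} \<or> S \<notin> nsub n (n + k) \<or> S' \<notin> nsub n (n + k)"
    then show "Hs r S' S = 0" unfolding Hs_def by auto
  next
    fix x S S' assume S: "S \<in> nsub n (n + k)" and S': "S' \<in> nsub n (n + k)"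
    have "Hop \<beta> t q (n + k) x S' S = poly (RP \<beta> t n k (if S' = S then 1 else 0) (hh S' S)) x"
      unfolding poly_HopP[symmetric] hh[OF S S'] ..
    also have "\<dots> = (if S' = S then tpoch \<beta> t (n + k) k x else 0)
           + (1 + \<beta> * x) * (\<Sum>r\<in>{1..k}. Hs r S' S * tpoch \<beta> t (n + k) (k - r) x / (1 + \<beta> * t (n + r)))"
      unfolding poly_RP[OF tne] using S S' by (auto simp: Hs_def intro!: sum.cong)
    finally show "Hop \<beta> t q (n + k) x S' S = (if S' = S then tpoch \<beta> t (n + k) k x else 0)
           + (1 + \<beta> * x) * (\<Sum>r\<in>{1..k}. Hs r S' S * tpoch \<beta> t (n + k) (k - r) x / (1 + \<beta> * t (n + r)))" .
  qed
next
  fix A B assume A: "HSpec \<beta> t q n k A" and B: "HSpec \<beta> t q n k B"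
  show "A = B"
  proof (intro ext)
    fix r S' S
    show "A r S' S = B r S' S"
    proof (cases "r \<notin> {1..k} \<or> S \<notin> nsub n (n + k) \<or> S' \<notin> nsub n (n + k)")
      case True then show ?thesis using A B unfolding HSpec_def by auto
    next
      case False
      then have r: "r \<in> {1..k}" and S: "S \<in> nsub n (n + k)" and S': "S' \<in> nsub n (n + k)" by auto
      have "RP \<beta> t n k (if S' = S then 1 else 0) (\<lambda>r. A r S' S) = RP \<beta> t n k (if S' = S then 1 else 0) (\<lambda>r. B r S' S)"
        using spec_poly[OF A tne S S'] spec_poly[OF B tne S S'] by simp
      from uniq_entry[OF k tne this] r show ?thesis by auto
    qed
  qed
qed

lemma Gk:
  fixes \<beta> :: "'a::field" and n k :: nat
  assumes tne: "\<forall>j\<in>{1..n + k}. 1 + \<beta> * t j \<noteq> 0" and S: "S \<subseteq> {1..n + k}"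
  shows "(\<Prod>i\<in>{1..n + k}. if i \<in> S then 1 else 1 / (1 + \<beta> * t i))
      / (\<Prod>i\<in>{1..k}. 1 / (1 + \<beta> * t (n + k + 1 - i))) = PiT \<beta> t S / PiT \<beta> t {1..n}"
proof -
  let ?f = "\<lambda>i. 1 + \<beta> * t i"
  let ?A = "{1..n + k}"
  have G: "(\<Prod>i\<in>?A. if i \<in> S then 1 else 1 / ?f i) = 1 / prod ?f (?A - S)"
  proof -
    have "(\<Prod>i\<in>?A. if i \<in> S then 1 else 1 / ?f i) = (\<Prod>i\<in>?A - S. 1 / ?f i)"
      by (rule prod.mono_neutral_cong_right) auto
    then show ?thesis by (simp add: prod_dividef)
  qed
  have C: "(\<Prod>i\<in>{1..k}. 1 / ?f (n + k + 1 - i)) = 1 / prod ?f {n + 1..n + k}"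
  proof -
    have "(\<Prod>i\<in>{1..k}. ?f (n + k + 1 - i)) = prod ?f {n + 1..n + k}"
      by (rule prod.reindex_bij_witness[of _ "\<lambda>j. n + k + 1 - j" "\<lambda>i. n + k + 1 - i"]) auto
    then show ?thesis by (simp add: prod_dividef)
  qed
  have split: "prod ?f ?A = prod ?f {1..n} * prod ?f {n + 1..n + k}"
  proof -
    have "?A = {1..n} \<union> {n + 1..n + k}" by auto
    then show ?thesis by (simp add: prod.union_disjoint)
  qed
  have sub: "prod ?f ?A = prod ?f (?A - S) * prod ?f S"
    using prod.subset_diff[OF S] by simp
  have nz1: "prod ?f (?A - S) \<noteq> 0" "prod ?f {n + 1..n + k} \<noteq> 0" "prod ?f {1..n} \<noteq> 0"
    using tne by (auto simp: prod_zero_iff)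
  show ?thesis
    unfolding G C PiT_def using split sub nz1
    by (simp add: field_simps)
qed

lemma Hcoef_char:
  fixes \<beta> q :: "'a::field_char_0" and n k :: nat
  assumes n: "n \<ge> 1" and k: "k \<ge> 1" and tne: "\<forall>j\<in>{1..n + k}. 1 + \<beta> * t j \<noteq> 0"
    and S: "S \<in> nsub n (n + k)" and S': "S' \<in> nsub n (n + k)"
  shows "(if S' = S then 1 else 0) + \<beta> * Hcoef \<beta> t q n k 1 S' S
     = PiT \<beta> t S / PiT \<beta> t {1..n}
       * (transfer (tau \<beta>) False (n + k) False S' S + q * transfer (tau \<beta>) True (n + k) True S' S)"
proof -
  let ?R0 = "transfer (tau \<beta>) False (n + k) False S' S + q * transfer (tau \<beta>) True (n + k) True S' S"
  let ?G = "\<Prod>i\<in>{1..n + k}. if i \<in> S then 1 else 1 / (1 + \<beta> * t i)"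
  let ?c = "\<Prod>i\<in>{1..k}. 1 / (1 + \<beta> * t (n + k + 1 - i))"
  have H: "HSpec \<beta> t q n k (Hcoef \<beta> t q n k)"
    unfolding Hcoef_eq by (rule theI'[OF ex1_spec[OF n k tne]])
  have P: "HopP \<beta> t q (n + k) S' S = RP \<beta> t n k (if S' = S then 1 else 0) (\<lambda>r. Hcoef \<beta> t q n k r S' S)"
    by (rule spec_poly[OF H tne S S'])
  have h1: "\<forall>i\<in>{1..k}. 1 + \<beta> * t (n + k + 1 - i) \<noteq> 0" using tne_idx[OF tne order.refl] .
  have ck: "coeff (tpP \<beta> t (n + k) k) k = ?c" using tpP_props[OF h1] by simp
  have cnz: "?c \<noteq> 0" using h1 by (auto simp: prod_zero_iff)
  have "?G * ?R0 = ?c * ((if S' = S then 1 else 0) + \<beta> * Hcoef \<beta> t q n k 1 S' S)"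
    using conjunct2[OF coeff_HopP_k[OF S, of \<beta> t q S']] coeff_RP[OF tne k, of "if S' = S then 1 else 0" "\<lambda>r. Hcoef \<beta> t q n k r S' S"]
    unfolding P ck by simp
  then have "(if S' = S then 1 else 0) + \<beta> * Hcoef \<beta> t q n k 1 S' S = ?G / ?c * ?R0"
    using cnz by (simp add: field_simps)
  also have "?G / ?c = PiT \<beta> t S / PiT \<beta> t {1..n}"
    by (rule Gk[OF tne nsub_props(1)[OF S]])
  finally show ?thesis .
qed


lemma Fs_eq:
  fixes \<beta> x :: "'a::field" and n k :: nat
  assumes tne: "\<forall>j\<in>{1..n + k}. 1 + \<beta> * t j \<noteq> 0" and xne: "1 + \<beta> * x \<noteq> 0"
    and S: "S \<in> nsub n (n + k)"
  shows "Fs \<beta> t x (n + k) S = (\<Prod>j\<in>{1..n}. ominusb \<beta> (t j) x) * (\<Prod>j\<in>{n + 1..n + k}. ominusb \<beta> x (t j))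
           * (PiT \<beta> t S / PiT \<beta> t {1..n})"
proof -
  let ?A = "{1..n + k}"
  define a where "a i = ominusb \<beta> x (t i)" for i
  define \<rho> where "\<rho> i = - (1 + \<beta> * t i) / (1 + \<beta> * x)" for i
  have ba: "ominusb \<beta> (t i) x = \<rho> i * a i" if "i \<in> ?A" for i
  proof -
    have "1 + \<beta> * t i \<noteq> 0" using tne that by auto
    then show ?thesis using xne unfolding a_def \<rho>_def ominusb_def
      by (simp add: divide_simps) (simp add: algebra_simps)
  qed
  have SA: "S \<subseteq> ?A" "card S = n" "finite S" using nsub_props[OF S] by auto
  have "Fs \<beta> t x (n + k) S = (\<Prod>i\<in>?A. a i * (if i \<in> S then \<rho> i else 1))"
    unfolding Fs_def by (rule prod.cong) (auto simp: ba a_def)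
  also have "\<dots> = prod a ?A * (\<Prod>i\<in>?A. if i \<in> S then \<rho> i else 1)" by (rule prod.distrib)
  also have "(\<Prod>i\<in>?A. if i \<in> S then \<rho> i else 1) = prod \<rho> S"
    using SA by (simp add: prod.If_cases Int_absorb1)
  finally have F: "Fs \<beta> t x (n + k) S = prod a ?A * prod \<rho> S" .
  have "(\<Prod>j\<in>{1..n}. ominusb \<beta> (t j) x) = (\<Prod>j\<in>{1..n}. \<rho> j * a j)"
    by (rule prod.cong) (auto simp: ba)
  also have "\<dots> = prod \<rho> {1..n} * prod a {1..n}" by (simp add: prod.distrib)
  finally have c1: "(\<Prod>j\<in>{1..n}. ominusb \<beta> (t j) x) = prod \<rho> {1..n} * prod a {1..n}" .
  have split: "prod a ?A = prod a {1..n} * prod a {n + 1..n + k}"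
  proof -
    have "?A = {1..n} \<union> {n + 1..n + k}" by auto
    then show ?thesis by (simp add: prod.union_disjoint)
  qed
  have rho: "prod \<rho> B = (- 1 / (1 + \<beta> * x)) ^ card B * PiT \<beta> t B" if "finite B" for B
  proof -
    have "prod \<rho> B = (\<Prod>i\<in>B. (- 1 / (1 + \<beta> * x)) * (1 + \<beta> * t i))"
      unfolding \<rho>_def by (rule prod.cong) (auto simp: divide_simps xne)
    also have "\<dots> = (- 1 / (1 + \<beta> * x)) ^ card B * PiT \<beta> t B"
      unfolding PiT_def prod.distrib by simp
    finally show ?thesis .
  qed
  have pn: "PiT \<beta> t {1..n} \<noteq> 0" using tne unfolding PiT_def by (auto simp: prod_zero_iff)
  have alg: "P1 \<noteq> 0 \<Longrightarrow> (a1 * a2) * (R * PS) = ((R * P1) * a1) * a2 * (PS / P1)" for a1 a2 R PS P1 :: 'a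
    by (simp add: field_simps)
  have r1: "prod \<rho> S = (- 1 / (1 + \<beta> * x)) ^ n * PiT \<beta> t S" using rho[OF SA(3)] SA(2) by simp
  have r2: "prod \<rho> {1..n} = (- 1 / (1 + \<beta> * x)) ^ n * PiT \<beta> t {1..n}" using rho[of "{1..n}"] by simp
  show ?thesis
    unfolding F c1 a_def[symmetric] split r1 r2 by (rule alg[OF pn])
qed

theorem part2:
  fixes \<beta> q :: "'a::field_char_0" and t :: "nat \<Rightarrow> 'a" and n k :: nat
  assumes n: "n \<ge> 1" and k: "k \<ge> 1"
    and tne: "\<forall>j\<in>{1..n + k}. 1 + \<beta> * t j \<noteq> 0"
  shows "\<forall>x. 1 + \<beta> * x \<noteq> 0 \<longrightarrow> (\<forall>S\<in>nsub n (n + k). \<forall>S'\<in>nsub n (n + k).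
        (\<Sum>U\<in>nsub n (n + k). Hop \<beta> t q (n + k) x S' U * Eop \<beta> t q (n + k) (onegb \<beta> x) U S)
      = (\<Prod>j\<in>{1..n}. ominusb \<beta> (t j) x) * (\<Prod>j\<in>{n + 1..n + k}. ominusb \<beta> x (t j))
          * ((if S' = S then 1 else 0) + \<beta> * Hcoef \<beta> t q n k 1 S' S)
        + (if S' = S then q else 0))"
proof (intro allI impI ballI)
  fix x S S' assume xne: "1 + \<beta> * x \<noteq> 0" and S: "S \<in> nsub n (n + k)" and S': "S' \<in> nsub n (n + k)"
  have N: "n + k \<ge> 1" using n by simp
  show "(\<Sum>U\<in>nsub n (n + k). Hop \<beta> t q (n + k) x S' U * Eop \<beta> t q (n + k) (onegb \<beta> x) U S)
      = (\<Prod>j\<in>{1..n}. ominusb \<beta> (t j) x) * (\<Prod>j\<in>{n + 1..n + k}. ominusb \<beta> x (t j))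
          * ((if S' = S then 1 else 0) + \<beta> * Hcoef \<beta> t q n k 1 S' S)
        + (if S' = S then q else 0)"
    unfolding HE[OF S S' N tne xne] Fs_eq[OF tne xne S] Hcoef_char[OF n k tne S S']
    by (simp add: algebra_simps add_divide_distrib)
qed


lemma card_Int_Suc: "finite A \<Longrightarrow> card (A \<inter> {1..Suc j}) = card (A \<inter> {1..j}) + (if Suc j \<in> A then 1 else 0)"
proof -
  assume "finite A"
  have "A \<inter> {1..Suc j} = (if Suc j \<in> A then insert (Suc j) (A \<inter> {1..j}) else A \<inter> {1..j})"
    by (auto simp: atLeastAtMostSuc_conv)
  then show ?thesis by auto
qed

lemma tau_closed:
  assumes fin: "finite S'"
  shows "transfer (tau \<beta>) b j c S' S =
    (if c = (if j = 0 then b else (j \<in> S \<and> j \<notin> S'))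
        \<and> (\<forall>i\<in>{1..j}. (i \<in> S' \<and> i \<notin> S) = (if i = 1 then b else (i - 1 \<in> S \<and> i - 1 \<notin> S')))
     then \<beta> ^ card ((S' - S) \<inter> {1..j}) else 0)"
proof (induction j arbitrary: c)
  case 0 then show ?case by simp
next
  case (Suc j)
  have cS: "card ((S' - S) \<inter> {1..Suc j}) = card ((S' - S) \<inter> {1..j}) + (if Suc j \<in> S' - S then 1 else 0)"
    using card_Int_Suc[of "S' - S" j] fin by simp
  have all: "(\<forall>i\<in>{1..Suc j}. P i) = ((\<forall>i\<in>{1..j}. P i) \<and> P (Suc j))" for P
    by (auto simp: atLeastAtMostSuc_conv)
  show ?case
    unfolding transfer.simps Suc.IH all cS
    by (cases c; cases "j = 0"; cases "Suc j \<in> S"; cases "Suc j \<in> S'"; cases "j \<in> S"; cases "j \<in> S'"; cases b)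
       (simp_all add: tau_simps)
qed


lemma dec_gap:
  fixes f :: "int \<Rightarrow> int"
  assumes dec1: "\<forall>i. f (i + 1) < f i"
  shows "i \<le> j \<Longrightarrow> f j + (j - i) \<le> f i"
proof -
  assume "i \<le> j"
  then obtain m :: nat where m: "j = i + int m" by (metis le_add_diff_inverse zle_iff_zadd)
  have "f (i + int m) + int m \<le> f i" for m
  proof (induction m)
    case 0 then show ?case by simp
  next
    case (Suc m)
    have "f (i + int (Suc m)) < f (i + int m)" using spec[OF dec1, of "i + int m"] by (simp add: algebra_simps)
    then show ?case using Suc.IH by linarith
  qed
  then show ?thesis using m by simp
qed

lemma dec_strict:
  fixes f :: "int \<Rightarrow> int"
  assumes dec1: "\<forall>i. f (i + 1) < f i"
  shows "i < j \<Longrightarrow> f j < f i"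
  using dec_gap[OF dec1, of i j] by simp

lemma move:
  fixes f e :: "int \<Rightarrow> int"
  assumes dec: "\<And>i j. i < j \<Longrightarrow> f j < f i"
    and e01: "\<And>i. e i = 0 \<or> e i = 1"
    and H: "\<And>i. e i = 1 \<Longrightarrow> f i + 1 \<notin> range f"
  shows "range f - range (\<lambda>i. f i + e i) = f ` {i. e i = 1}"
    and "range (\<lambda>i. f i + e i) - range f = (\<lambda>i. f i + 1) ` {i. e i = 1}"
proof -
  show "range f - range (\<lambda>i. f i + e i) = f ` {i. e i = 1}"
  proof (intro equalityI subsetI)
    fix x assume "x \<in> range f - range (\<lambda>i. f i + e i)"
    then obtain i where i: "x = f i" "\<forall>j. x \<noteq> f j + e j" by auto
    then have "e i \<noteq> 0" by (metis add.right_neutral)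
    then show "x \<in> f ` {i. e i = 1}" using i e01 by auto
  next
    fix x assume "x \<in> f ` {i. e i = 1}"
    then obtain i where i: "x = f i" "e i = 1" by auto
    have ne: "f j + e j \<noteq> f i" for j
    proof (cases j i rule: linorder_cases)
      case less then show ?thesis using dec[OF less] e01[of j] by auto
    next
      case equal then show ?thesis using i by simp
    next
      case greater
      then have "f j < f i" by (rule dec)
      show ?thesis
      proof
        assume "f j + e j = f i"
        then have "e j = 1" "f j + 1 = f i" using \<open>f j < f i\<close> e01[of j] by auto
        then show False using H[of j] by auto
      qed
    qed
    have "f i \<notin> range (\<lambda>i. f i + e i)"
    proof
      assume "f i \<in> range (\<lambda>i. f i + e i)"
      then obtain j where "f i = f j + e j" by blast
      then show False using ne[of j] by simp
    qed
    then show "x \<in> range f - range (\<lambda>i. f i + e i)" using i by auto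
  qed
next
  show "range (\<lambda>i. f i + e i) - range f = (\<lambda>i. f i + 1) ` {i. e i = 1}"
  proof (intro equalityI subsetI)
    fix x assume "x \<in> range (\<lambda>i. f i + e i) - range f"
    then obtain i where i: "x = f i + e i" "x \<notin> range f" by auto
    then have "e i \<noteq> 0" by auto
    then have "e i = 1" using e01[of i] by simp
    then show "x \<in> (\<lambda>i. f i + 1) ` {i. e i = 1}" using i by auto
  next
    fix x assume "x \<in> (\<lambda>i. f i + 1) ` {i. e i = 1}"
    then obtain i where i: "x = f i + 1" "e i = 1" by auto
    moreover have "f i + e i \<in> range (\<lambda>i. f i + e i)" by (rule rangeI)
    then have "f i + 1 \<in> range (\<lambda>i. f i + e i)" using i(2) by simp
    ultimately show "x \<in> range (\<lambda>i. f i + e i) - range f" using H[of i] by auto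
  qed
qed

lemma H_of_R2:
  fixes F G :: "int \<Rightarrow> int" and c :: int
  assumes decf: "\<And>i. F (i + 1) + c - (i + 1) < F i + c - i"
    and decg: "\<And>i. G (i + 1) + c - (i + 1) < G i + c - i"
    and E01: "\<And>i. G i - F i = 0 \<or> G i - F i = 1"
    and R2: "\<And>i i'. G i - F i = 1 \<Longrightarrow> G i' - F i' = 1 \<Longrightarrow> F i = F i' \<Longrightarrow> i = i'"
    and Ei: "G i - F i = 1"
  shows "F i + c - i + 1 \<notin> range (\<lambda>i. F i + c - i)"
proof
  define f where "f = (\<lambda>i. F i + c - i)"
  let ?f = f
  assume "F i + c - i + 1 \<in> range (\<lambda>i. F i + c - i)"
  then obtain i'' where i'': "?f i'' = ?f i + 1" unfolding f_def by auto
  have dec1: "\<forall>i. ?f (i + 1) < ?f i" using decf by (simp add: f_def)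
  have "i'' < i"
  proof (rule ccontr)
    assume "\<not> i'' < i"
    then have "i \<le> i''" by simp
    then show False using dec_gap[of ?f, OF dec1, of i i''] i'' by simp
  qed
  have "i'' = i - 1"
  proof (rule ccontr)
    assume "i'' \<noteq> i - 1"
    then have "i'' + 1 \<le> i - 1" using \<open>i'' < i\<close> by simp
    have "?f (i - 1) + ((i - 1) - (i'' + 1)) \<le> ?f (i'' + 1)"
      by (rule dec_gap[of ?f, OF dec1]) (use \<open>i'' + 1 \<le> i - 1\<close> in simp)
    moreover have "?f (i'' + 1) < ?f i''" using dec1 by blast
    moreover have "?f i + 1 \<le> ?f (i - 1)" using spec[OF dec1, of "i - 1"] by simp
    ultimately show False using i'' \<open>i'' + 1 \<le> i - 1\<close> by simp
  qed
  then have fi1: "F (i - 1) + c - (i - 1) = F i + c - i + 1" using i'' by (simp add: f_def)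
  have "G i + c - i < G (i - 1) + c - (i - 1)" using decg[of "i - 1"] by simp
  then have "G (i - 1) - F (i - 1) = 1" using fi1 Ei E01[of "i - 1"] by auto
  moreover have "F (i - 1) = F i" using fi1 by simp
  ultimately have "i - 1 = i" using R2[OF _ Ei] by blast
  then show False by simp
qed

lemma R2_of_H:
  fixes F :: "int \<Rightarrow> int" and c :: int
  assumes decf: "\<And>i. F (i + 1) + c - (i + 1) < F i + c - i"
    and H: "\<And>i. G i - F i = 1 \<Longrightarrow> F i + c - i + 1 \<notin> range (\<lambda>i. F i + c - i)"
    and Ei: "G i - F i = 1" and Ei': "G i' - F i' = 1" and FF: "F i = F i'"
  shows "i = i'"
proof (rule ccontr)
  define f where "f = (\<lambda>i. F i + c - i)"
  let ?f = f
  have dec1: "\<forall>i. ?f (i + 1) < ?f i" using decf by (simp add: f_def)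
  have H': "G i - F i = 1 \<Longrightarrow> f i + 1 \<notin> range f" for i using H[of i] by (simp add: f_def)
  assume "i \<noteq> i'"
  then consider "i < i'" | "i' < i" by linarith
  then show False
  proof cases
    case 1
    have a: "?f i' + 1 \<le> ?f (i' - 1)" using spec[OF dec1, of "i' - 1"] by simp
    have b: "?f (i' - 1) + ((i' - 1) - i) \<le> ?f i" by (rule dec_gap[of ?f, OF dec1]) (use 1 in simp)
    have "?f (i' - 1) = ?f i' + 1" using a b FF by (simp add: f_def)
    then show False using H'[OF Ei'] by (metis rangeI)
  next
    case 2
    have a: "?f i + 1 \<le> ?f (i - 1)" using spec[OF dec1, of "i - 1"] by simp
    have b: "?f (i - 1) + ((i - 1) - i') \<le> ?f i'" by (rule dec_gap[of ?f, OF dec1]) (use 2 in simp)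
    have "?f (i - 1) = ?f i + 1" using a b FF by (simp add: f_def)
    then show False using H'[OF Ei] by (metis rangeI)
  qed
qed


lemma loop_shift:
  assumes "n \<ge> 1"
  shows "loop n k la d (i + m * int n) = loop n k la d i - m * int k"
proof -
  have e: "i + m * int n - d - 1 = (i - d - 1) + m * int n" by simp
  have nz: "int n \<noteq> 0" using assms by simp
  show ?thesis unfolding loop_def e mod_mult_self1 div_mult_self1[OF nz] by (simp add: algebra_simps)
qed

lemma loop_d1: "loop n k la 1 i = loop n k la 0 (i - 1) + 1"
  unfolding loop_def by (simp add: algebra_simps)

lemma loop_row:
  assumes "r \<in> {1..n}"
  shows "loop n k la 0 (int r) = int (la r)"
proof -
  have m: "(int r - 0 - 1) mod int n = int r - 1" "(int r - 0 - 1) div int n = 0" using assms by auto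
  have "nat (int r - 1) + 1 = r" using assms by auto
  then show ?thesis unfolding loop_def m by simp
qed

lemma decomp:
  assumes "n \<ge> (1::nat)"
  obtains r a where "r \<in> {1..n}" "i = int r + a * int n"
proof -
  let ?r = "nat ((i - 1) mod int n) + 1" and ?a = "(i - 1) div int n"
  have "0 \<le> (i - 1) mod int n" "(i - 1) mod int n < int n" using assms by auto
  then have r: "?r \<in> {1..n}" by auto
  have "i = int ?r + ?a * int n"
    using \<open>0 \<le> (i - 1) mod int n\<close> by (simp add: algebra_simps)
  then show ?thesis using r that by blast
qed

definition Q :: "nat \<Rightarrow> nat \<Rightarrow> (nat \<Rightarrow> nat) \<Rightarrow> int \<Rightarrow> int" where
  "Q n k la i = loop n k la 0 i + int n + 1 - i"

lemma Q_shift: "n \<ge> 1 \<Longrightarrow> Q n k la (i + m * int n) = Q n k la i - m * int (n + k)"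
  unfolding Q_def loop_shift by (simp add: algebra_simps)

lemma Q_row: "r \<in> {1..n} \<Longrightarrow> Q n k la (int r) = int (la r + n + 1 - r)"
  unfolding Q_def loop_row by auto

lemma parts_props:
  assumes "la \<in> parts n k"
  shows "\<And>i. i \<in> {1..n} \<Longrightarrow> la i \<le> k" "\<And>i j. 1 \<le> i \<Longrightarrow> i \<le> j \<Longrightarrow> j \<le> n \<Longrightarrow> la j \<le> la i"
    "\<And>i. i \<notin> {1..n} \<Longrightarrow> la i = 0"
proof -
  show "\<And>i. i \<in> {1..n} \<Longrightarrow> la i \<le> k" "\<And>i. i \<notin> {1..n} \<Longrightarrow> la i = 0" using assms by (auto simp: parts_def)
  fix i j :: nat assume ij: "1 \<le> i" "i \<le> j" "j \<le> n"
  have step: "\<forall>i. 1 \<le> i \<and> i < n \<longrightarrow> la (Suc i) \<le> la i" using assms by (auto simp: parts_def)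
  obtain m where m: "j = i + m" using ij le_Suc_ex by blast
  have "la (i + m) \<le> la i" if "i + m \<le> n" for m
    using that
  proof (induction m)
    case 0 then show ?case by simp
  next
    case (Suc m)
    then have "la (Suc (i + m)) \<le> la (i + m)" using step ij(1) by auto
    then show ?case using Suc by simp
  qed
  then show "la j \<le> la i" using m ij by simp
qed

lemma Q_dec1:
  assumes la: "la \<in> parts n k" and n: "n \<ge> 1"
  shows "Q n k la (i + 1) < Q n k la i"
proof -
  obtain r a where r: "r \<in> {1..n}" and i: "i = int r + a * int n" using decomp[OF n] by blast
  note P = parts_props[OF la]
  show ?thesis
  proof (cases "r < n")
    case True
    then have r1: "Suc r \<in> {1..n}" by auto
    have "i + 1 = int (Suc r) + a * int n" using i by simp
    then have "Q n k la (i + 1) = Q n k la (int (Suc r)) - a * int (n + k)" using Q_shift[OF n] by metis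
    moreover have "Q n k la i = Q n k la (int r) - a * int (n + k)" using Q_shift[OF n] i by metis
    moreover have "la (Suc r) \<le> la r" using P(2)[of r "Suc r"] r True by auto
    ultimately show ?thesis using Q_row[OF r1, of k la] Q_row[OF r, of k la] r1 by simp
  next
    case False
    then have rn: "r = n" using r by auto
    have "i + 1 = int 1 + (a + 1) * int n" using i rn by (simp add: algebra_simps)
    then have "Q n k la (i + 1) = Q n k la (int 1) - (a + 1) * int (n + k)" using Q_shift[OF n] by metis
    moreover have "Q n k la i = Q n k la (int n) - a * int (n + k)" using Q_shift[OF n] i rn by metis
    moreover have "la 1 \<le> k" using P(1)[of 1] n by auto
    moreover have "Q n k la (int 1) = int (la 1 + n + 1 - 1)" by (rule Q_row) (use n in simp)
    moreover have "Q n k la (int n) = int (la n + n + 1 - n)" by (rule Q_row) (use n in simp)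
    ultimately show ?thesis by (simp add: algebra_simps)
  qed
qed

definition Lift :: "nat \<Rightarrow> nat set \<Rightarrow> int set" where
  "Lift N A = {x. \<exists>a\<in>A. \<exists>m::int. x = int a + m * int N}"

lemma Iset_alt: "Iset n la = (\<lambda>r. la r + n + 1 - r) ` {1..n}"
proof (intro equalityI subsetI)
  fix x assume "x \<in> Iset n la"
  then obtain i where i: "i \<in> {1..n}" "x = la (n + 1 - i) + i" by (auto simp: Iset_def)
  then show "x \<in> (\<lambda>r. la r + n + 1 - r) ` {1..n}" by (intro image_eqI[of _ _ "n + 1 - i"]) auto
next
  fix x assume "x \<in> (\<lambda>r. la r + n + 1 - r) ` {1..n}"
  then obtain r where r: "r \<in> {1..n}" "x = la r + n + 1 - r" by auto
  then show "x \<in> Iset n la" unfolding Iset_def by (intro CollectI exI[of _ "n + 1 - r"]) auto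
qed


definition pos :: "nat \<Rightarrow> (nat \<Rightarrow> nat) \<Rightarrow> nat \<Rightarrow> nat" where
  "pos n la r = la r + n + 1 - r"

lemma pos_bounds:
  assumes la: "la \<in> parts n k" and r: "r \<in> {1..n}"
  shows "1 \<le> pos n la r" "pos n la r \<le> n + k"
  using parts_props(1)[OF la r] r unfolding pos_def by auto

lemma pos_dec:
  assumes la: "la \<in> parts n k" and "1 \<le> r" "r < r'" "r' \<le> n"
  shows "pos n la r' < pos n la r"
  using parts_props(2)[OF la, of r r'] assms unfolding pos_def by auto

lemma Iset_pos: "Iset n la = pos n la ` {1..n}"
  unfolding Iset_alt pos_def ..

lemma pos_inj: "la \<in> parts n k \<Longrightarrow> inj_on (pos n la) {1..n}"
  by (rule inj_onI) (metis atLeastAtMost_iff linorder_neqE_nat pos_dec less_irrefl)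

lemma Iset_nsub:
  assumes la: "la \<in> parts n k"
  shows "Iset n la \<in> nsub n (n + k)"
proof -
  have "Iset n la \<subseteq> {1..n + k}" unfolding Iset_pos using pos_bounds[OF la] by auto
  moreover have "card (Iset n la) = n" unfolding Iset_pos using card_image[OF pos_inj[OF la]] by simp
  ultimately show ?thesis by (simp add: nsub_def)
qed

lemma count_above:
  assumes la: "la \<in> parts n k" and r: "r \<in> {1..n}"
  shows "card {y \<in> Iset n la. pos n la r < y} = r - 1"
proof -
  have "{y \<in> Iset n la. pos n la r < y} = pos n la ` {1..r - 1}"
  proof (intro equalityI subsetI)
    fix y assume "y \<in> {y \<in> Iset n la. pos n la r < y}"
    then obtain r' where r': "r' \<in> {1..n}" "y = pos n la r'" "pos n la r < pos n la r'" unfolding Iset_pos by auto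
    have "r' < r"
    proof (rule ccontr)
      assume "\<not> r' < r"
      then have "r \<le> r'" by simp
      then show False using r' r pos_dec[OF la, of r r'] by (cases "r = r'") auto
    qed
    then show "y \<in> pos n la ` {1..r - 1}" using r' by auto
  next
    fix y assume "y \<in> pos n la ` {1..r - 1}"
    then obtain r' where r': "r' \<in> {1..r - 1}" "y = pos n la r'" by auto
    then show "y \<in> {y \<in> Iset n la. pos n la r < y}" using r pos_dec[OF la, of r' r] unfolding Iset_pos by auto
  qed
  moreover have "inj_on (pos n la) {1..r - 1}" by (rule inj_on_subset[OF pos_inj[OF la]]) (use r in auto)
  ultimately show ?thesis by (simp add: card_image)
qed

lemma Iset_inj:
  assumes la: "la \<in> parts n k" and la': "la' \<in> parts n k" and eq: "Iset n la = Iset n la'"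
  shows "la = la'"
proof
  fix r
  show "la r = la' r"
  proof (cases "r \<in> {1..n}")
    case False then show ?thesis using parts_props(3)[OF la] parts_props(3)[OF la'] by simp
  next
    case True
    have "pos n la' r \<in> Iset n la'" unfolding Iset_pos using True by auto
    then have "pos n la' r \<in> Iset n la" using eq by simp
    then obtain r'' where r'': "r'' \<in> {1..n}" "pos n la' r = pos n la r''" unfolding Iset_pos by auto
    have "r - 1 = r'' - 1" using count_above[OF la' True] count_above[OF la r''(1)] r''(2) eq by simp
    then have "r = r''" using True r'' by auto
    then show ?thesis using r'' unfolding pos_def using True by auto
  qed
qed

lemma parts_finite: "finite (parts n k)"
proof -
  let ?g = "\<lambda>la. map la [1..<n + 1]"
  have "inj_on ?g (parts n k)"
  proof (rule inj_onI)
    fix la la' assume la: "la \<in> parts n k" and la': "la' \<in> parts n k" and e: "?g la = ?g la'"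
    show "la = la'"
    proof
      fix r show "la r = la' r"
      proof (cases "r \<in> {1..n}")
        case False then show ?thesis using parts_props(3)[OF la] parts_props(3)[OF la'] by simp
      next
        case True
        then have "r \<in> set [1..<n + 1]" by auto
        then show ?thesis using e by (metis map_eq_conv)
      qed
    qed
  qed
  moreover have "?g ` parts n k \<subseteq> {xs. set xs \<subseteq> {0..k} \<and> length xs = n}"
    using parts_props(1) by fastforce
  moreover have "finite {xs. set xs \<subseteq> {0..k::nat} \<and> length xs = n}" by (rule finite_lists_length_eq) simp
  ultimately show ?thesis by (metis finite_imageD finite_subset)
qed

lemma pieri_finite: "finite (pieri_pairs n k mu)"
proof -
  have "pieri_pairs n k mu \<subseteq> parts n k \<times> {0, 1}" by (auto simp: pieri_pairs_def)
  then show ?thesis by (rule finite_subset) (simp add: parts_finite)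
qed

lemma range_Q:
  assumes la: "la \<in> parts n k" and n: "n \<ge> 1"
  shows "range (Q n k la) = Lift (n + k) (Iset n la)"
proof (intro equalityI subsetI)
  fix x assume "x \<in> range (Q n k la)"
  then obtain i where i: "x = Q n k la i" by auto
  obtain r a where r: "r \<in> {1..n}" "i = int r + a * int n" using decomp[OF n] by blast
  have "x = int (pos n la r) + (- a) * int (n + k)"
    using i r Q_shift[OF n, of k la "int r" a] Q_row[OF r(1), of k la] by (simp add: pos_def)
  then show "x \<in> Lift (n + k) (Iset n la)" unfolding Lift_def Iset_pos using r by blast
next
  fix x assume "x \<in> Lift (n + k) (Iset n la)"
  then obtain r m where r: "r \<in> {1..n}" "x = int (pos n la r) + m * int (n + k)" unfolding Lift_def Iset_pos by auto
  have "Q n k la (int r + (- m) * int n) = x"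
    using r Q_shift[OF n, of k la "int r" "- m"] Q_row[OF r(1), of k la] by (simp add: pos_def)
  then show "x \<in> range (Q n k la)" by (metis rangeI)
qed

lemma Lift_mem:
  assumes A: "A \<subseteq> {1..N}" and x: "x \<in> {1..N}"
  shows "int x \<in> Lift N A \<longleftrightarrow> x \<in> A"
proof
  assume "int x \<in> Lift N A"
  then obtain a m where a: "a \<in> A" "int x = int a + m * int N" unfolding Lift_def by auto
  have "a \<in> {1..N}" using a A by auto
  then have bb: "int a \<le> int N" "1 \<le> int a" "int x \<le> int N" "1 \<le> int x" using x by auto
  have b: "- int N < m * int N" "m * int N < int N" using a(2) bb by linarith+
  have "m = 0"
  proof (rule ccontr)
    assume "m \<noteq> 0"
    then consider "m \<ge> 1" | "m \<le> -1" by linarith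
    then show False
    proof cases
      case 1 then have "1 * int N \<le> m * int N" by (intro mult_right_mono) auto
      then show False using b by linarith
    next
      case 2 then have "m * int N \<le> (-1) * int N" by (intro mult_right_mono) auto
      then show False using b by linarith
    qed
  qed
  then show "x \<in> A" using a by simp
next
  assume "x \<in> A"
  moreover have "int x = int x + 0 * int N" by simp
  ultimately show "int x \<in> Lift N A" unfolding Lift_def by blast
qed

lemma Lift_shift: "x + m * int N \<in> Lift N A \<longleftrightarrow> x \<in> Lift N A"
proof
  assume "x + m * int N \<in> Lift N A"
  then obtain a m' where "a \<in> A" "x + m * int N = int a + m' * int N" unfolding Lift_def by auto
  then have "x = int a + (m' - m) * int N" by (simp add: algebra_simps)
  then show "x \<in> Lift N A" using \<open>a \<in> A\<close> unfolding Lift_def by auto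
next
  assume "x \<in> Lift N A"
  then obtain a m' where "a \<in> A" "x = int a + m' * int N" unfolding Lift_def by auto
  then have "x + m * int N = int a + (m' + m) * int N" by (simp add: algebra_simps)
  then show "x + m * int N \<in> Lift N A" using \<open>a \<in> A\<close> unfolding Lift_def by auto
qed


lemma pieri_iff:
  "(la, d) \<in> pieri_pairs n k mu \<longleftrightarrow> la \<in> parts n k \<and> d \<in> {0, 1}
     \<and> (\<forall>i. loop n k la (int d) i - loop n k mu 0 i = 0 \<or> loop n k la (int d) i - loop n k mu 0 i = 1)
     \<and> (\<forall>i i'. loop n k la (int d) i - loop n k mu 0 i = 1 \<longrightarrow> loop n k la (int d) i' - loop n k mu 0 i' = 1
          \<longrightarrow> loop n k mu 0 i = loop n k mu 0 i' \<longrightarrow> i = i')"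
  (is "?L \<longleftrightarrow> ?R")
proof -
  let ?F = "loop n k mu 0" and ?G = "loop n k la (int d)"
  have lift: "(i, j) \<in> skew_lift n k la (int d) mu \<longleftrightarrow> ?G i \<ge> j \<and> j > ?F i" for i j
    by (simp add: skew_lift_def)
  show ?thesis
  proof
    assume L: ?L
    then have A: "la \<in> parts n k" "d \<in> {0, 1}" "\<forall>i. ?F i \<le> ?G i"
      and P2: "\<forall>i j j'. (i, j) \<in> skew_lift n k la (int d) mu \<longrightarrow> (i, j') \<in> skew_lift n k la (int d) mu \<longrightarrow> j = j'"
      and P3: "\<forall>i i' j. (i, j) \<in> skew_lift n k la (int d) mu \<longrightarrow> (i', j) \<in> skew_lift n k la (int d) mu \<longrightarrow> i = i'"
      unfolding pieri_pairs_def by auto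
    have E: "?G i - ?F i = 0 \<or> ?G i - ?F i = 1" for i
    proof (rule ccontr)
      assume "\<not> (?G i - ?F i = 0 \<or> ?G i - ?F i = 1)"
      moreover have "?F i \<le> ?G i" using A(3) by blast
      ultimately have "?G i \<ge> ?F i + 2" by linarith
      then have "(i, ?F i + 1) \<in> skew_lift n k la (int d) mu" "(i, ?F i + 2) \<in> skew_lift n k la (int d) mu"
        unfolding lift by auto
      then show False using P2 by force
    qed
    have R2: "i = i'" if "?G i - ?F i = 1" "?G i' - ?F i' = 1" "?F i = ?F i'" for i i'
    proof -
      have "(i, ?F i + 1) \<in> skew_lift n k la (int d) mu" "(i', ?F i + 1) \<in> skew_lift n k la (int d) mu"
        unfolding lift using that by auto
      then show ?thesis using P3 by blast
    qed
    show ?R using A E R2 by blast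
  next
    assume R: ?R
    then have A: "la \<in> parts n k" "d \<in> {0, 1}"
      and E: "\<And>i. ?G i - ?F i = 0 \<or> ?G i - ?F i = 1"
      and R2: "\<And>i i'. ?G i - ?F i = 1 \<Longrightarrow> ?G i' - ?F i' = 1 \<Longrightarrow> ?F i = ?F i' \<Longrightarrow> i = i'" by blast+
    have mem: "(i, j) \<in> skew_lift n k la (int d) mu \<longleftrightarrow> ?G i - ?F i = 1 \<and> j = ?F i + 1" for i j
      unfolding lift using E[of i] by auto
    have c1: "\<forall>i. ?F i \<le> ?G i"
    proof
      fix i show "?F i \<le> ?G i" using E[of i] by linarith
    qed
    have c2: "\<forall>i j j'. (i, j) \<in> skew_lift n k la (int d) mu \<longrightarrow> (i, j') \<in> skew_lift n k la (int d) mu \<longrightarrow> j = j'"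
      unfolding mem by auto
    have c3: "\<forall>i i' j. (i, j) \<in> skew_lift n k la (int d) mu \<longrightarrow> (i', j) \<in> skew_lift n k la (int d) mu \<longrightarrow> i = i'"
    proof (intro allI impI)
      fix i i' j assume "(i, j) \<in> skew_lift n k la (int d) mu" "(i', j) \<in> skew_lift n k la (int d) mu"
      then have "?G i - ?F i = 1" "?G i' - ?F i' = 1" "?F i = ?F i'" unfolding mem by auto
      then show "i = i'" by (rule R2)
    qed
    show ?L unfolding pieri_pairs_def using A c1 c2 c3 by simp
  qed
qed

lemma skew_size_eq:
  assumes n: "n \<ge> 1"
    and E: "\<And>i. loop n k la d i - loop n k mu 0 i = 0 \<or> loop n k la d i - loop n k mu 0 i = 1"
  shows "skew_size n k la d mu = card {r \<in> {1..n}. loop n k la d (int r) - loop n k mu 0 (int r) = 1}"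
proof -
  let ?F = "loop n k mu 0" and ?G = "loop n k la d"
  let ?L = "skew_lift n k la d mu"
  let ?R = "{r \<in> {1..n}. ?G (int r) - ?F (int r) = 1}"
  have mem: "(i, j) \<in> ?L \<longleftrightarrow> ?G i - ?F i = 1 \<and> j = ?F i + 1" for i j
    unfolding skew_lift_def using E[of i] by auto
  have img: "cyl_rel n k `` {(i, j)} = {(i + m * int n, j - m * int k) | m. True}" for i j
    unfolding cyl_rel_def by auto
  have Eshift: "?G (i + m * int n) - ?F (i + m * int n) = ?G i - ?F i" for i m
    using loop_shift[OF n] by simp
  have Fshift: "?F (i + m * int n) = ?F i - m * int k" for i m using loop_shift[OF n] by simp
  define \<phi> where "\<phi> r = cyl_rel n k `` {(int r, ?F (int r) + 1)}" for r
  have "bij_betw \<phi> ?R (?L // cyl_rel n k)"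
  proof (rule bij_betw_imageI)
    show "inj_on \<phi> ?R"
    proof (rule inj_onI)
      fix r r' assume r: "r \<in> ?R" and r': "r' \<in> ?R" and e: "\<phi> r = \<phi> r'"
      have "(int r', ?F (int r') + 1) \<in> \<phi> r'" unfolding \<phi>_def img by (auto intro: exI[of _ 0])
      then have "(int r', ?F (int r') + 1) \<in> \<phi> r" using e by simp
      then obtain m where m: "int r' = int r + m * int n" unfolding \<phi>_def img by auto
      have "m = 0"
      proof (rule ccontr)
        assume "m \<noteq> 0"
        then consider "m \<ge> 1" | "m \<le> -1" by linarith
        then show False
        proof cases
          case 1 then have "1 * int n \<le> m * int n" by (intro mult_right_mono) auto
          then show False using m r r' by auto
        next
          case 2 then have "m * int n \<le> (-1) * int n" by (intro mult_right_mono) auto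
          then show False using m r r' by auto
        qed
      qed
      then show "r = r'" using m by simp
    qed
  next
    show "\<phi> ` ?R = ?L // cyl_rel n k"
    proof (intro equalityI subsetI)
      fix X assume "X \<in> \<phi> ` ?R"
      then obtain r where r: "r \<in> ?R" "X = \<phi> r" by auto
      then have "(int r, ?F (int r) + 1) \<in> ?L" unfolding mem by auto
      then show "X \<in> ?L // cyl_rel n k" unfolding r(2) \<phi>_def by (rule quotientI)
    next
      fix X assume "X \<in> ?L // cyl_rel n k"
      then obtain x where x: "x \<in> ?L" "X = cyl_rel n k `` {x}" by (auto elim: quotientE)
      obtain i j where ij: "x = (i, j)" by (cases x)
      have Ei: "?G i - ?F i = 1" "j = ?F i + 1" using x(1) mem ij by auto
      obtain r a where r: "r \<in> {1..n}" "i = int r + a * int n" using decomp[OF n] by blast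
      have Er: "?G (int r) - ?F (int r) = 1" using Ei(1) Eshift[of "int r" a] r by simp
      have "X = \<phi> r"
      proof -
        have "X = {(i + m * int n, j - m * int k) | m. True}" using x(2) ij img by simp
        also have "\<dots> = {(int r + m * int n, ?F (int r) + 1 - m * int k) | m. True}"
        proof (intro equalityI subsetI)
          fix y assume "y \<in> {(i + m * int n, j - m * int k) | m. True}"
          then obtain m where "y = (i + m * int n, j - m * int k)" by auto
          then have "y = (int r + (a + m) * int n, ?F (int r) + 1 - (a + m) * int k)"
            using r Ei(2) Fshift[of "int r" a] by (simp add: algebra_simps)
          then show "y \<in> {(int r + m * int n, ?F (int r) + 1 - m * int k) | m. True}" by blast
        next
          fix y assume "y \<in> {(int r + m * int n, ?F (int r) + 1 - m * int k) | m. True}"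
          then obtain m where "y = (int r + m * int n, ?F (int r) + 1 - m * int k)" by auto
          then have "y = (i + (m - a) * int n, j - (m - a) * int k)"
            using r Ei(2) Fshift[of "int r" a] by (simp add: algebra_simps)
          then show "y \<in> {(i + m * int n, j - m * int k) | m. True}" by blast
        qed
        also have "\<dots> = \<phi> r" unfolding \<phi>_def img ..
        finally show ?thesis .
      qed
      then show "X \<in> \<phi> ` ?R" using r Er by auto
    qed
  qed
  then show ?thesis unfolding skew_size_def by (simp add: bij_betw_same_card)
qed


lemma g_eq: "d \<in> {0, 1} \<Longrightarrow> loop n k la (int d) i + int n + 1 - i = Q n k la (i - int d)"
  unfolding Q_def by (auto simp: loop_d1)

lemma Q_pos: "r \<in> {1..n} \<Longrightarrow> Q n k la (int r) = int (pos n la r)"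
  unfolding pos_def by (rule Q_row)

lemma Q_dec:
  assumes "la \<in> parts n k" "n \<ge> 1"
  shows "i < j \<Longrightarrow> Q n k la j < Q n k la i"
  by (rule dec_strict) (use Q_dec1[OF assms] in auto)

lemma Q_in_range:
  assumes mu: "mu \<in> parts n k" and n: "n \<ge> 1" and b: "1 \<le> Q n k mu i" "Q n k mu i \<le> int (n + k)"
  shows "\<exists>r. r \<in> {1..n} \<and> i = int r"
proof -
  have q1: "Q n k mu 1 = int (mu 1 + n)" using Q_row[of 1 n k mu] n by simp
  have qn: "Q n k mu (int n) = int (mu n + 1)" using Q_row[of n n k mu] n by simp
  have m1: "mu 1 \<le> k" using parts_props(1)[OF mu, of 1] n by simp
  have "i \<ge> 1"
  proof (rule ccontr)
    assume "\<not> i \<ge> 1"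
    then have "i \<le> 0" by simp
    have "Q n k mu 0 = Q n k mu (int n + (-1) * int n)" by simp
    also have "\<dots> = Q n k mu (int n) + int (n + k)" using Q_shift[OF n, of k mu "int n" "-1"] by simp
    finally have "Q n k mu 0 = int (mu n + 1) + int (n + k)" using qn by simp
    moreover have "Q n k mu 0 \<le> Q n k mu i"
      using Q_dec[OF mu n, of i 0] \<open>i \<le> 0\<close> by (cases "i = 0") auto
    ultimately show False using b by simp
  qed
  moreover have "i \<le> int n"
  proof (rule ccontr)
    assume "\<not> i \<le> int n"
    then have "i \<ge> 1 + int n" by simp
    have "Q n k mu (1 + int n) = Q n k mu 1 - int (n + k)" using Q_shift[OF n, of k mu 1 1] by simp
    moreover have "Q n k mu i \<le> Q n k mu (1 + int n)"
      using Q_dec[OF mu n, of "1 + int n" i] \<open>i \<ge> 1 + int n\<close> by (cases "i = 1 + int n") auto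
    ultimately show False using b q1 m1 by simp
  qed
  ultimately show ?thesis by (intro exI[of _ "nat i"]) auto
qed

lemma range_shift: "range (\<lambda>i. h (i - c)) = range (h :: int \<Rightarrow> 'b)"
proof (intro equalityI subsetI)
  fix x assume "x \<in> range h"
  then obtain i where "x = h i" by auto
  then have "x = h ((i + c) - c)" by simp
  then show "x \<in> range (\<lambda>i. h (i - c))" by blast
qed auto

lemma card_diff_sym:
  assumes "finite A" "finite B" "card A = card B"
  shows "card (A - B) = card (B - A)"
proof -
  have "card (A - B) = card A - card (A \<inter> B)" using assms by (simp add: card_Diff_subset_Int)
  moreover have "card (B - A) = card B - card (B \<inter> A)" using assms by (simp add: card_Diff_subset_Int)
  ultimately show ?thesis using assms(3) by (simp add: Int_commute)
qed

lemma dirI: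
  fixes n k :: nat
  assumes n: "n \<ge> 1" and mu: "mu \<in> parts n k" and P: "(la, d) \<in> pieri_pairs n k mu"
  shows "((d = 1) = (n + k \<in> Iset n mu \<and> n + k \<notin> Iset n la))
     \<and> (\<forall>i\<in>{1..n + k}. (i \<in> Iset n la \<and> i \<notin> Iset n mu)
            = (if i = 1 then d = 1 else (i - 1 \<in> Iset n mu \<and> i - 1 \<notin> Iset n la)))
     \<and> skew_size n k la (int d) mu = card (Iset n la - Iset n mu)"
proof -
  define F where "F = loop n k mu 0"
  define G where "G = loop n k la (int d)"
  define e where "e i = G i - F i" for i
  define f where "f = Q n k mu"
  let ?N = "n + k" and ?S = "Iset n mu" and ?S' = "Iset n la"
  let ?LS = "Lift ?N ?S" and ?LS' = "Lift ?N ?S'"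
  from P have la: "la \<in> parts n k" and d: "d \<in> {0, 1}"
    and E01: "\<And>i. e i = 0 \<or> e i = 1"
    and R2: "\<And>i i'. G i - F i = 1 \<Longrightarrow> G i' - F i' = 1 \<Longrightarrow> F i = F i' \<Longrightarrow> i = i'"
    unfolding pieri_iff e_def F_def G_def by blast+
  have f': "f = (\<lambda>i. F i + (int n + 1) - i)" unfolding f_def F_def Q_def by (auto simp: algebra_simps)
  have g: "f i + e i = Q n k la (i - int d)" for i
    using g_eq[OF d, of n k la i] unfolding f' e_def G_def by (simp add: algebra_simps)
  have decf: "F (i + 1) + (int n + 1) - (i + 1) < F i + (int n + 1) - i" for i
    using Q_dec1[OF mu n, of i] unfolding f' f_def[symmetric] by simp
  have decg: "G (i + 1) + (int n + 1) - (i + 1) < G i + (int n + 1) - i" for i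
  proof -
    have "Q n k la (i + 1 - int d) < Q n k la (i - int d)" using Q_dec1[OF la n, of "i - int d"] by (simp add: algebra_simps)
    then show ?thesis using g_eq[OF d, of n k la i] g_eq[OF d, of n k la "i + 1"] unfolding G_def by (simp add: algebra_simps)
  qed
  have H: "f i + 1 \<notin> range f" if "e i = 1" for i
    using H_of_R2[of F "int n + 1" G, OF decf decg E01[unfolded e_def] R2 that[unfolded e_def]] unfolding f' .
  have fdec: "i < j \<Longrightarrow> f j < f i" for i j unfolding f_def by (rule Q_dec[OF mu n])
  note M = move[of f e, OF fdec E01 H]
  have rf: "range f = ?LS" unfolding f_def by (rule range_Q[OF mu n])
  have rg: "range (\<lambda>i. f i + e i) = ?LS'" unfolding g range_shift by (rule range_Q[OF la n])
  have D1: "?LS - ?LS' = f ` {i. e i = 1}" using M(1) unfolding rf rg .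
  have D2: "?LS' - ?LS = (\<lambda>i. f i + 1) ` {i. e i = 1}" using M(2) unfolding rf rg .
  have PV: "x \<in> ?LS' - ?LS \<longleftrightarrow> x - 1 \<in> ?LS - ?LS'" for x
  proof
    assume "x \<in> ?LS' - ?LS"
    then obtain i where "e i = 1" "x = f i + 1" unfolding D2 by auto
    then show "x - 1 \<in> ?LS - ?LS'" unfolding D1 by auto
  next
    assume "x - 1 \<in> ?LS - ?LS'"
    then obtain i where "e i = 1" "x - 1 = f i" unfolding D1 by auto
    then have "x = f i + 1" by simp
    then show "x \<in> ?LS' - ?LS" unfolding D2 using \<open>e i = 1\<close> by auto
  qed
  have SA: "?S \<subseteq> {1..?N}" "?S' \<subseteq> {1..?N}" "card ?S = n" "card ?S' = n" "finite ?S" "finite ?S'"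
    using nsub_props[OF Iset_nsub[OF mu]] nsub_props[OF Iset_nsub[OF la]] by auto
  have mem: "(y \<in> ?S \<and> y \<notin> ?S') \<longleftrightarrow> int y \<in> ?LS - ?LS'" "(y \<in> ?S' \<and> y \<notin> ?S) \<longleftrightarrow> int y \<in> ?LS' - ?LS"
    if "y \<in> {1..?N}" for y
    using Lift_mem[OF SA(1) that] Lift_mem[OF SA(2) that] by auto
  have Nin: "(?N \<in> ?S \<and> ?N \<notin> ?S') \<longleftrightarrow> mu 1 = k \<and> e 1 = 1"
  proof
    assume "?N \<in> ?S \<and> ?N \<notin> ?S'"
    then have "int ?N \<in> f ` {i. e i = 1}" using mem(1)[of ?N] n D1 by auto
    then obtain i where i: "e i = 1" "f i = int ?N" by auto
    then obtain r where r: "r \<in> {1..n}" "i = int r" using Q_in_range[OF mu n, of i] n unfolding f_def by auto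
    have pr: "pos n mu r = ?N" using i r Q_pos[OF r(1), of k mu] unfolding f_def by simp
    have "r = 1"
    proof (rule ccontr)
      assume "r \<noteq> 1"
      then have "pos n mu r < pos n mu 1" using pos_dec[OF mu, of 1 r] r by auto
      moreover have "pos n mu 1 \<le> ?N" using pos_bounds[OF mu, of 1] n by auto
      ultimately show False using pr by simp
    qed
    then show "mu 1 = k \<and> e 1 = 1" using pr i r unfolding pos_def by auto
  next
    assume a: "mu 1 = k \<and> e 1 = 1"
    have "f 1 = int ?N" using Q_pos[of 1 n k mu] n a unfolding f_def pos_def by simp
    then have "int ?N \<in> ?LS - ?LS'" unfolding D1 using a by (metis (mono_tags, lifting) image_eqI mem_Collect_eq)
    then show "?N \<in> ?S \<and> ?N \<notin> ?S'" using mem(1)[of ?N] n by auto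
  qed
  have m1: "mu 1 \<le> k" using parts_props(1)[OF mu, of 1] n by simp
  have Nd: "(d = 1) = (?N \<in> ?S \<and> ?N \<notin> ?S')"
  proof (cases "d = 0")
    case True
    have "e 1 = int (la 1) - int (mu 1)" unfolding e_def G_def F_def True
      using loop_row[of 1 n k la] loop_row[of 1 n k mu] n by simp
    moreover have "la 1 \<le> k" using parts_props(1)[OF la, of 1] n by simp
    ultimately show ?thesis unfolding Nin using True by auto
  next
    case False
    then have d1: "d = 1" using d by simp
    have "loop n k la 0 0 = loop n k la 0 (int n + (-1) * int n)" by simp
    also have "\<dots> = int (la n) + int k" using loop_shift[OF n, of k la 0 "int n" "-1"] loop_row[of n n k la] n by simp
    finally have "G 1 = int (la n) + int k + 1" unfolding G_def d1 using loop_d1[of n k la 1] by simp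
    then have "e 1 = int (la n) + int k + 1 - int (mu 1)" unfolding e_def F_def using loop_row[of 1 n k mu] n by simp
    then have "e 1 = 1 \<and> mu 1 = k" using E01[of 1] m1 by auto
    then show ?thesis unfolding Nin using d1 by auto
  qed
  have cond: "\<forall>i\<in>{1..?N}. (i \<in> ?S' \<and> i \<notin> ?S) = (if i = 1 then d = 1 else (i - 1 \<in> ?S \<and> i - 1 \<notin> ?S'))"
  proof
    fix i assume i: "i \<in> {1..?N}"
    show "(i \<in> ?S' \<and> i \<notin> ?S) = (if i = 1 then d = 1 else (i - 1 \<in> ?S \<and> i - 1 \<notin> ?S'))"
    proof (cases "i = 1")
      case True
      have "(i \<in> ?S' \<and> i \<notin> ?S) = (0 \<in> ?LS - ?LS')" using mem(2)[OF i] PV[of "int i"] True by simp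
      also have "\<dots> = (0 + 1 * int ?N \<in> ?LS - ?LS')" using Lift_shift[of 0 1 ?N ?S] Lift_shift[of 0 1 ?N ?S'] by simp
      also have "\<dots> = (?N \<in> ?S \<and> ?N \<notin> ?S')" using mem(1)[of ?N] n by simp
      finally show ?thesis using True Nd by simp
    next
      case False
      then have i1: "i - 1 \<in> {1..?N}" using i by auto
      have "(i \<in> ?S' \<and> i \<notin> ?S) = (int (i - 1) \<in> ?LS - ?LS')" using mem(2)[OF i] PV[of "int i"] False i by (simp add: of_nat_diff)
      also have "\<dots> = (i - 1 \<in> ?S \<and> i - 1 \<notin> ?S')" using mem(1)[OF i1] by simp
      finally show ?thesis using False by simp
    qed
  qed
  have Eloop: "\<And>i. loop n k la (int d) i - loop n k mu 0 i = 0 \<or> loop n k la (int d) i - loop n k mu 0 i = 1"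
    using E01 unfolding e_def G_def F_def .
  have sz: "skew_size n k la (int d) mu = card {r \<in> {1..n}. e (int r) = 1}"
    unfolding skew_size_eq[OF n Eloop] e_def G_def F_def ..
  have SS: "?S - ?S' = pos n mu ` {r \<in> {1..n}. e (int r) = 1}"
  proof (intro equalityI subsetI)
    fix y assume y: "y \<in> ?S - ?S'"
    then have y1: "y \<in> {1..?N}" using SA by auto
    then have "int y \<in> f ` {i. e i = 1}" using mem(1)[OF y1] y D1 by auto
    then obtain i where i: "e i = 1" "f i = int y" by auto
    then obtain r where r: "r \<in> {1..n}" "i = int r" using Q_in_range[OF mu n, of i] y1 unfolding f_def by auto
    then show "y \<in> pos n mu ` {r \<in> {1..n}. e (int r) = 1}" using i Q_pos[OF r(1), of k mu] unfolding f_def by force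
  next
    fix y assume "y \<in> pos n mu ` {r \<in> {1..n}. e (int r) = 1}"
    then obtain r where r: "r \<in> {1..n}" "e (int r) = 1" "y = pos n mu r" by auto
    have y1: "y \<in> {1..?N}" using pos_bounds[OF mu r(1)] r by auto
    have "int y \<in> ?LS - ?LS'" unfolding D1 using r Q_pos[OF r(1), of k mu] unfolding f_def by force
    then show "y \<in> ?S - ?S'" using mem(1)[OF y1] by simp
  qed
  have "card (?S - ?S') = card {r \<in> {1..n}. e (int r) = 1}"
    unfolding SS by (rule card_image) (rule inj_on_subset[OF pos_inj[OF mu]], auto)
  moreover have "card (?S' - ?S) = card (?S - ?S')" using card_diff_sym[of ?S' ?S] SA by simp
  ultimately have "skew_size n k la (int d) mu = card (?S' - ?S)" using sz by simp
  then show ?thesis using Nd cond by simp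
qed

lemma dirII:
  fixes n k :: nat
  assumes n: "n \<ge> 1" and mu: "mu \<in> parts n k" and d: "d \<in> {0, 1}" and S': "S' \<in> nsub n (n + k)"
    and V1: "(d = 1) = (n + k \<in> Iset n mu \<and> n + k \<notin> S')"
    and V2: "\<forall>i\<in>{1..n + k}. (i \<in> S' \<and> i \<notin> Iset n mu) = (if i = 1 then d = 1 else (i - 1 \<in> Iset n mu \<and> i - 1 \<notin> S'))"
  shows "\<exists>la. Iset n la = S' \<and> (la, d) \<in> pieri_pairs n k mu"
proof -
  let ?N = "n + k" and ?S = "Iset n mu"
  let ?LS = "Lift ?N ?S" and ?LS' = "Lift ?N S'"
  define f where "f = Q n k mu"
  define e where "e i = (if f i \<in> ?LS - ?LS' then 1 else 0 :: int)" for i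
  define g where "g i = f i + e i" for i
  have N1: "?N \<ge> 1" using n by simp
  have SA: "?S \<subseteq> {1..?N}" "S' \<subseteq> {1..?N}" using nsub_props[OF Iset_nsub[OF mu]] nsub_props[OF S'] by auto
  have mem: "(y \<in> ?S \<and> y \<notin> S') \<longleftrightarrow> int y \<in> ?LS - ?LS'" "(y \<in> S' \<and> y \<notin> ?S) \<longleftrightarrow> int y \<in> ?LS' - ?LS"
    if "y \<in> {1..?N}" for y
    using Lift_mem[OF SA(1) that] Lift_mem[OF SA(2) that] by auto
  have shiftD: "x + m * int ?N \<in> ?LS - ?LS' \<longleftrightarrow> x \<in> ?LS - ?LS'" "x + m * int ?N \<in> ?LS' - ?LS \<longleftrightarrow> x \<in> ?LS' - ?LS" for x m
    using Lift_shift[of x m ?N ?S] Lift_shift[of x m ?N S'] by auto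
  have PV: "x \<in> ?LS' - ?LS \<longleftrightarrow> x - 1 \<in> ?LS - ?LS'" for x
  proof -
    obtain r m where r: "r \<in> {1..?N}" "x = int r + m * int ?N" using decomp[OF N1] by blast
    have "x \<in> ?LS' - ?LS \<longleftrightarrow> (r \<in> S' \<and> r \<notin> ?S)" using r shiftD(2)[of "int r" m] mem(2)[OF r(1)] by simp
    also have "\<dots> \<longleftrightarrow> x - 1 \<in> ?LS - ?LS'"
    proof (cases "r = 1")
      case True
      have "x - 1 = int ?N + (m - 1) * int ?N" using r True by (simp add: algebra_simps)
      then have "x - 1 \<in> ?LS - ?LS' \<longleftrightarrow> (?N \<in> ?S \<and> ?N \<notin> S')"
        using shiftD(1)[of "int ?N" "m - 1"] mem(1)[of ?N] n by simp
      then show ?thesis using V2 V1 True r by auto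
    next
      case False
      then have r1: "r - 1 \<in> {1..?N}" using r by auto
      have "x - 1 = int (r - 1) + m * int ?N" using r False by (simp add: of_nat_diff)
      then have "x - 1 \<in> ?LS - ?LS' \<longleftrightarrow> (r - 1 \<in> ?S \<and> r - 1 \<notin> S')"
        using shiftD(1)[of "int (r - 1)" m] mem(1)[OF r1] by simp
      then show ?thesis using V2 False r by auto
    qed
    finally show ?thesis .
  qed
  have rf: "range f = ?LS" unfolding f_def by (rule range_Q[OF mu n])
  have E01: "e i = 0 \<or> e i = 1" for i unfolding e_def by simp
  have H: "f i + 1 \<notin> range f" if "e i = 1" for i
  proof -
    have "f i \<in> ?LS - ?LS'" using that unfolding e_def by (auto split: if_splits)
    then have "f i + 1 \<in> ?LS' - ?LS" using PV[of "f i + 1"] by simp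
    then show ?thesis unfolding rf by simp
  qed
  have fdec: "i < j \<Longrightarrow> f j < f i" for i j unfolding f_def by (rule Q_dec[OF mu n])
  have fdec1: "\<forall>i. f (i + 1) < f i" using fdec by simp
  note M = move[of f e, OF fdec E01 H]
  have A1: "f ` {i. e i = 1} = ?LS - ?LS'"
  proof (intro equalityI subsetI)
    fix x assume "x \<in> f ` {i. e i = 1}" then show "x \<in> ?LS - ?LS'" unfolding e_def by (auto split: if_splits)
  next
    fix x assume x: "x \<in> ?LS - ?LS'"
    then obtain i where "x = f i" using rf by auto
    then show "x \<in> f ` {i. e i = 1}" using x unfolding e_def by auto
  qed
  have A2: "(\<lambda>i. f i + 1) ` {i. e i = 1} = ?LS' - ?LS"
  proof (intro equalityI subsetI)
    fix x assume "x \<in> (\<lambda>i. f i + 1) ` {i. e i = 1}"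
    then obtain i where "e i = 1" "x = f i + 1" by auto
    then have "x - 1 \<in> ?LS - ?LS'" using A1 by auto
    then show "x \<in> ?LS' - ?LS" using PV by simp
  next
    fix x assume "x \<in> ?LS' - ?LS"
    then have "x - 1 \<in> f ` {i. e i = 1}" using PV A1 by simp
    then obtain i where "e i = 1" "x - 1 = f i" by auto
    then show "x \<in> (\<lambda>i. f i + 1) ` {i. e i = 1}" by (auto intro!: image_eqI[of _ _ i])
  qed
  have rg: "range g = ?LS'"
  proof -
    have "range g = (range f - (range f - range g)) \<union> (range g - range f)" by blast
    also have "\<dots> = (?LS - (?LS - ?LS')) \<union> (?LS' - ?LS)"
      using M A1 A2 unfolding rf g_def[abs_def] by simp
    finally show ?thesis by blast
  qed
  have gdec1: "g (i + 1) < g i" for i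
  proof -
    have "f (i + 1) < f i" using fdec by simp
    moreover have "\<not> (e (i + 1) = 1 \<and> e i = 0 \<and> f (i + 1) + 1 = f i)"
      using H[of "i + 1"] by (metis rangeI)
    ultimately show ?thesis unfolding g_def using E01[of i] E01[of "i + 1"] by auto
  qed
  have gdec: "\<forall>i. g (i + 1) < g i" using gdec1 by simp
  have eshift: "e (i + a * int n) = e i" for i a
  proof -
    have "f (i + a * int n) = f i + (- a) * int ?N" unfolding f_def using Q_shift[OF n, of k mu i a] by simp
    then show ?thesis unfolding e_def using shiftD(1)[of "f i" "- a"] by simp
  qed
  have gshift: "g (i + a * int n) = g i - a * int ?N" for i a
    unfolding g_def eshift f_def using Q_shift[OF n, of k mu i a] by simp
  have f1: "f 1 = int (mu 1) + int n" using Q_row[of 1 n k mu] n unfolding f_def by simp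
  have fn: "f (int n) = int (mu n) + 1" using Q_row[of n n k mu] n unfolding f_def by simp
  have m1: "mu 1 \<le> k" using parts_props(1)[OF mu, of 1] n by simp
  have bnd: "g (1 + int d) \<le> int ?N \<and> g (int n + int d) \<ge> 1"
  proof (cases "d = 0")
    case True
    have "\<not> (f 1 = int ?N \<and> e 1 = 1)"
    proof
      assume a: "f 1 = int ?N \<and> e 1 = 1"
      then have "int ?N \<in> ?LS - ?LS'" unfolding e_def by (auto split: if_splits)
      then have "?N \<in> ?S \<and> ?N \<notin> S'" using mem(1)[of ?N] n by simp
      then show False using V1 True by simp
    qed
    then have "g 1 \<le> int ?N" unfolding g_def using f1 m1 E01[of 1] by auto
    moreover have "g (int n) \<ge> 1" unfolding g_def using fn E01[of "int n"] by auto
    ultimately show ?thesis using True by simp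
  next
    case False
    then have d1: "d = 1" using d by simp
    then have NS: "?N \<in> ?S" "?N \<notin> S'" using V1 by auto
    then obtain r where r: "r \<in> {1..n}" "?N = pos n mu r" unfolding Iset_pos by auto
    have "pos n mu r \<le> pos n mu 1" using pos_dec[OF mu, of 1 r] r by (cases "r = 1") auto
    then have "f 1 = int ?N" using r f1 m1 unfolding pos_def by auto
    moreover have "int ?N \<in> ?LS - ?LS'" using mem(1)[of ?N] n NS by simp
    ultimately have e1: "e 1 = 1" unfolding e_def by simp
    have "g (1 + 1 * int n) = g 1 - int ?N" using gshift[of 1 1] by simp
    then have "g (int n + 1) = 1" unfolding g_def using e1 \<open>f 1 = int ?N\<close> by (simp add: add.commute)
    moreover have "g 2 \<le> int ?N"
    proof -
      have "f 2 < f 1" using fdec[of 1 2] by simp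
      moreover have "\<not> (f 2 + 1 = f 1 \<and> e 2 = 1)" using H[of 2] by (metis rangeI)
      ultimately show ?thesis unfolding g_def using E01[of 2] \<open>f 1 = int ?N\<close> by auto
    qed
    ultimately show ?thesis using d1 by simp
  qed
  have gup: "g (int r + int d) \<ge> 1 + int n - int r" if "r \<in> {1..n}" for r
    using dec_gap[OF gdec, of "int r + int d" "int n + int d"] that bnd by auto
  have glo: "g (int r + int d) \<le> int ?N - int r + 1" if "r \<in> {1..n}" for r
    using dec_gap[OF gdec, of "1 + int d" "int r + int d"] that bnd by auto
  define la where "la r = (if r \<in> {1..n} then nat (g (int r + int d) - int n - 1 + int r) else 0)" for r
  have la_val: "int (la r) = g (int r + int d) - int n - 1 + int r" if "r \<in> {1..n}" for r
    using gup[OF that] that unfolding la_def by auto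
  have la_parts: "la \<in> parts n k"
    unfolding parts_def
  proof (intro CollectI conjI ballI allI impI)
    fix i assume i: "i \<in> {1..n}"
    show "la i \<le> k" using la_val[OF i] glo[OF i] by simp
  next
    fix i assume i: "1 \<le> i \<and> i < n"
    then have i1: "i \<in> {1..n}" "Suc i \<in> {1..n}" by auto
    have "g (int (Suc i) + int d) < g (int i + int d)" using gdec1[of "int i + int d"] by (simp add: algebra_simps)
    then show "la (Suc i) \<le> la i" using la_val[OF i1(1)] la_val[OF i1(2)] by simp
  next
    fix i :: nat assume "i \<notin> {1..n}" then show "la i = 0" unfolding la_def by auto
  qed
  have Qla: "Q n k la j = g (j + int d)" for j
  proof -
    obtain r a where r: "r \<in> {1..n}" "j = int r + a * int n" using decomp[OF n] by blast
    have "Q n k la j = Q n k la (int r) - a * int ?N" using Q_shift[OF n, of k la "int r" a] r by simp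
    also have "\<dots> = int (la r) + int n + 1 - int r - a * int ?N" using Q_row[OF r(1), of k la] r by auto
    also have "\<dots> = g (int r + int d) - a * int ?N" using la_val[OF r(1)] by simp
    also have "\<dots> = g (int r + int d + a * int n)" using gshift by simp
    finally show ?thesis using r by (simp add: algebra_simps)
  qed
  have "Lift ?N (Iset n la) = ?LS'"
  proof -
    have "Lift ?N (Iset n la) = range (Q n k la)" using range_Q[OF la_parts n] by simp
    also have "\<dots> = range (\<lambda>j. g (j - (- int d)))" unfolding Qla by simp
    also have "\<dots> = ?LS'" unfolding range_shift rg ..
    finally show ?thesis .
  qed
  moreover have "Iset n la \<subseteq> {1..?N}" using nsub_props[OF Iset_nsub[OF la_parts]] by auto
  ultimately have Iset_eq: "Iset n la = S'"
    using Lift_mem[of "Iset n la" ?N] Lift_mem[OF SA(2)] SA(2) by blast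
  have fe: "loop n k la (int d) i - loop n k mu 0 i = e i" for i
    using g_eq[OF d, of n k la i] Qla[of "i - int d"] unfolding g_def f_def Q_def by simp
  have decf: "loop n k mu 0 (i + 1) + (int n + 1) - (i + 1) < loop n k mu 0 i + (int n + 1) - i" for i
    using fdec[of i "i + 1"] unfolding f_def Q_def by (simp add: algebra_simps)
  have H': "loop n k la (int d) i - loop n k mu 0 i = 1 \<Longrightarrow>
      loop n k mu 0 i + (int n + 1) - i + 1 \<notin> range (\<lambda>i. loop n k mu 0 i + (int n + 1) - i)" for i
  proof -
    have ff: "(\<lambda>i. loop n k mu 0 i + (int n + 1) - i) = f" unfolding f_def Q_def by (auto simp: algebra_simps)
    show "loop n k la (int d) i - loop n k mu 0 i = 1 \<Longrightarrow>
      loop n k mu 0 i + (int n + 1) - i + 1 \<notin> range (\<lambda>i. loop n k mu 0 i + (int n + 1) - i)"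
      using H[of i] unfolding fe ff by (simp add: f_def Q_def algebra_simps)
  qed
  have "(la, d) \<in> pieri_pairs n k mu"
    unfolding pieri_iff
  proof (intro conjI allI impI)
    show "la \<in> parts n k" by (rule la_parts)
    show "d \<in> {0, 1}" by (rule d)
  next
    fix i show "loop n k la (int d) i - loop n k mu 0 i = 0 \<or> loop n k la (int d) i - loop n k mu 0 i = 1"
      unfolding fe by (rule E01)
  next
    fix i i'
    assume "loop n k la (int d) i - loop n k mu 0 i = 1" "loop n k la (int d) i' - loop n k mu 0 i' = 1"
      "loop n k mu 0 i = loop n k mu 0 i'"
    then show "i = i'" using R2_of_H[where F="loop n k mu 0" and c="int n + 1" and G="loop n k la (int d)", OF decf H'] by blast
  qed
  then show ?thesis using Iset_eq by blast
qed


lemma pieri_sum: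
  fixes \<beta> q :: "'a::field"
  assumes n: "n \<ge> 1" and mu: "mu \<in> parts n k" and S': "S' \<in> nsub n (n + k)"
  shows "(\<Sum>(la, d)\<in>pieri_pairs n k mu. q ^ d * \<beta> ^ skew_size n k la (int d) mu * vvec n la S')
    = transfer (tau \<beta>) False (n + k) False S' (Iset n mu) + q * transfer (tau \<beta>) True (n + k) True S' (Iset n mu)"
proof -
  let ?N = "n + k" and ?S = "Iset n mu" and ?P = "pieri_pairs n k mu"
  define V where "V d = (((d::nat) = 1) = (?N \<in> ?S \<and> ?N \<notin> S')
      \<and> (\<forall>i\<in>{1..?N}. (i \<in> S' \<and> i \<notin> ?S) = (if i = 1 then d = 1 else (i - 1 \<in> ?S \<and> i - 1 \<notin> S'))))" for d
  define h where "h x = (case x of (la, d) \<Rightarrow> q ^ d * \<beta> ^ skew_size n k la (int d) mu * vvec n la S')" for x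
  have finS': "finite S'" using nsub_props(4)[OF S'] .
  have S'sub: "S' \<subseteq> {1..?N}" using nsub_props(1)[OF S'] .
  have tc: "transfer (tau \<beta>) (d = 1) ?N (d = 1) S' ?S = (if V d then \<beta> ^ card (S' - ?S) else 0)" for d
  proof -
    have "(S' - ?S) \<inter> {1..?N} = S' - ?S" using S'sub by auto
    then show ?thesis unfolding tau_closed[OF finS'] V_def
      by (intro if_cong) (use n in auto)
  qed
  define A where "A d = {x \<in> ?P. Iset n (fst x) = S' \<and> snd x = d}" for d
  have finP: "finite ?P" by (rule pieri_finite)
  have Ad: "sum h (A d) = (if V d then q ^ d * \<beta> ^ card (S' - ?S) else 0)" if d: "d \<in> {0, 1}" for d
  proof (cases "V d")
    case True
    obtain la where la: "Iset n la = S'" "(la, d) \<in> ?P"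
      using dirII[OF n mu d S'] True unfolding V_def by blast
    have A1: "A d = {(la, d)}"
    proof (intro equalityI subsetI)
      fix x assume x: "x \<in> A d"
      obtain la' d' where x': "x = (la', d')" by (cases x)
      have "la' \<in> parts n k" "Iset n la' = S'" "d' = d" using x x' unfolding A_def pieri_pairs_def by auto
      moreover have "la \<in> parts n k" using la(2) unfolding pieri_pairs_def by auto
      ultimately have "la' = la" using Iset_inj la(1) by metis
      then show "x \<in> {(la, d)}" using x' \<open>d' = d\<close> by simp
    next
      fix x assume "x \<in> {(la, d)}" then show "x \<in> A d" using la unfolding A_def by auto
    qed
    have "skew_size n k la (int d) mu = card (S' - ?S)" using dirI[OF n mu la(2)] la(1) by simp
    then show ?thesis unfolding A1 h_def using True la(1) by (simp add: vvec_def)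
  next
    case False
    have "A d = {}"
    proof (rule ccontr)
      assume "A d \<noteq> {}"
      then obtain la d' where x: "(la, d') \<in> A d" by auto
      then have "(la, d) \<in> ?P" "Iset n la = S'" unfolding A_def by auto
      then have "V d" using dirI[OF n mu] unfolding V_def by blast
      then show False using False by simp
    qed
    then show ?thesis using False by simp
  qed
  have "(\<Sum>(la, d)\<in>?P. q ^ d * \<beta> ^ skew_size n k la (int d) mu * vvec n la S') = sum h ?P"
    unfolding h_def by (simp add: case_prod_beta')
  also have "\<dots> = sum h (A 0 \<union> A 1)"
  proof (rule sum.mono_neutral_right[OF finP])
    show "A 0 \<union> A 1 \<subseteq> ?P" unfolding A_def by auto
    show "\<forall>x\<in>?P - (A 0 \<union> A 1). h x = 0"
    proof
      fix x assume x: "x \<in> ?P - (A 0 \<union> A 1)"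
      obtain la d where xd: "x = (la, d)" by (cases x)
      have "d \<in> {0, 1}" using x xd unfolding pieri_pairs_def by auto
      then have "Iset n la \<noteq> S'" using x xd unfolding A_def by auto
      then show "h x = 0" unfolding h_def xd vvec_def by simp
    qed
  qed
  also have "\<dots> = sum h (A 0) + sum h (A 1)"
    by (rule sum.union_disjoint) (use finP in \<open>auto simp: A_def\<close>)
  also have "\<dots> = (if V 0 then \<beta> ^ card (S' - ?S) else 0) + q * (if V 1 then \<beta> ^ card (S' - ?S) else 0)"
    using Ad[of 0] Ad[of 1] by simp
  also have "\<dots> = transfer (tau \<beta>) False ?N False S' ?S + q * transfer (tau \<beta>) True ?N True S' ?S"
    using tc[of 0] tc[of 1] by simp
  finally show ?thesis .
qed

lemma nsub_finite: "finite (nsub n N)"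
  by (rule finite_subset[of _ "Pow {1..N}"]) (auto simp: nsub_def)

theorem mainTheorem11:
  fixes \<beta> q :: "'a::field_char_0" and t :: "nat \<Rightarrow> 'a" and n k :: nat
  assumes "n \<ge> 1" and "k \<ge> 1"
    and "\<forall>j\<in>{1..n + k}. 1 + \<beta> * t j \<noteq> 0"
  shows
    "(\<forall>mu\<in>parts n k. \<forall>S'\<in>nsub n (n + k).
        (\<Sum>S\<in>nsub n (n + k).
            ((if S' = S then 1 else 0) + \<beta> * Hcoef \<beta> t q n k 1 S' S) * vvec n mu S)
      = PiT \<beta> t (Iset n mu) / PiT \<beta> t {1..n}
        * (\<Sum>(la, d)\<in>pieri_pairs n k mu. q ^ d * \<beta> ^ skew_size n k la (int d) mu * vvec n la S'))
   \<and> (\<forall>x. 1 + \<beta> * x \<noteq> 0 \<longrightarrow> (\<forall>S\<in>nsub n (n + k). \<forall>S'\<in>nsub n (n + k).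
        (\<Sum>U\<in>nsub n (n + k). Hop \<beta> t q (n + k) x S' U * Eop \<beta> t q (n + k) (onegb \<beta> x) U S)
      = (\<Prod>j\<in>{1..n}. ominusb \<beta> (t j) x) * (\<Prod>j\<in>{n + 1..n + k}. ominusb \<beta> x (t j))
          * ((if S' = S then 1 else 0) + \<beta> * Hcoef \<beta> t q n k 1 S' S)
        + (if S' = S then q else 0)))"
proof
  note n = assms(1) and k = assms(2) and tne = assms(3)
  show "\<forall>mu\<in>parts n k. \<forall>S'\<in>nsub n (n + k).
        (\<Sum>S\<in>nsub n (n + k).
            ((if S' = S then 1 else 0) + \<beta> * Hcoef \<beta> t q n k 1 S' S) * vvec n mu S)
      = PiT \<beta> t (Iset n mu) / PiT \<beta> t {1..n}
        * (\<Sum>(la, d)\<in>pieri_pairs n k mu. q ^ d * \<beta> ^ skew_size n k la (int d) mu * vvec n la S')"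
  proof (intro ballI)
    fix mu S' assume mu: "mu \<in> parts n k" and S': "S' \<in> nsub n (n + k)"
    have Im: "Iset n mu \<in> nsub n (n + k)" by (rule Iset_nsub[OF mu])
    have "(\<Sum>S\<in>nsub n (n + k). ((if S' = S then 1 else 0) + \<beta> * Hcoef \<beta> t q n k 1 S' S) * vvec n mu S)
       = (\<Sum>S\<in>nsub n (n + k). if S = Iset n mu then ((if S' = S then 1 else 0) + \<beta> * Hcoef \<beta> t q n k 1 S' S) else 0)"
      by (rule sum.cong) (auto simp: vvec_def)
    also have "\<dots> = (if S' = Iset n mu then 1 else 0) + \<beta> * Hcoef \<beta> t q n k 1 S' (Iset n mu)"
      using Im by (simp add: sum.delta[OF nsub_finite])
    also have "\<dots> = PiT \<beta> t (Iset n mu) / PiT \<beta> t {1..n}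
       * (transfer (tau \<beta>) False (n + k) False S' (Iset n mu) + q * transfer (tau \<beta>) True (n + k) True S' (Iset n mu))"
      by (rule Hcoef_char[OF n k tne Im S'])
    also have "\<dots> = PiT \<beta> t (Iset n mu) / PiT \<beta> t {1..n}
        * (\<Sum>(la, d)\<in>pieri_pairs n k mu. q ^ d * \<beta> ^ skew_size n k la (int d) mu * vvec n la S')"
      using pieri_sum[OF n mu S', of q \<beta>] by simp
    finally show "(\<Sum>S\<in>nsub n (n + k). ((if S' = S then 1 else 0) + \<beta> * Hcoef \<beta> t q n k 1 S' S) * vvec n mu S)
      = PiT \<beta> t (Iset n mu) / PiT \<beta> t {1..n}
        * (\<Sum>(la, d)\<in>pieri_pairs n k mu. q ^ d * \<beta> ^ skew_size n k la (int d) mu * vvec n la S')" .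
  qed
next
  show "\<forall>x. 1 + \<beta> * x \<noteq> 0 \<longrightarrow> (\<forall>S\<in>nsub n (n + k). \<forall>S'\<in>nsub n (n + k).
        (\<Sum>U\<in>nsub n (n + k). Hop \<beta> t q (n + k) x S' U * Eop \<beta> t q (n + k) (onegb \<beta> x) U S)
      = (\<Prod>j\<in>{1..n}. ominusb \<beta> (t j) x) * (\<Prod>j\<in>{n + 1..n + k}. ominusb \<beta> x (t j))
          * ((if S' = S then 1 else 0) + \<beta> * Hcoef \<beta> t q n k 1 S' S)
        + (if S' = S then q else 0))"
    by (rule part2[OF assms])
qed


end
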